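(* Let $F : \mathbb{R}^n \to \mathbb{R}^n$ be real analytic and suppose it extends to an entire map $F : \mathbb{C}^n \to \mathbb{C}^n$. If the Koopman operator $\mathcal{K}_F g = g\circ F$ is bounded (with domain all of the space) on the native space of the Gaussian RBF kernel over $\mathbb{R}^n$, then the Koopman operator $\mathcal{K}_F g = g \circ F$ induced by the extended map is bounded on $H_G(\mathbb{C}^n)$.
   Context: The Gaussian RBF kernel on $\mathbb{R}^n$ is $K(x,y) = \exp(-\|x-y\|_2^2/2)$. Its native space is the real RKHS on $\mathbb{R}^n$ with this kernel. $H_G(\mathbb{C}^n)$ denotes the RKHS of entire functions on $\mathbb{C}^n$ with reproducing kernel $K_G(z,w) = \exp\!\left(-\tfrac12 \sum_{j=1}^n (z_j - \overline{w_j})^2\right)$. Equivalently, $H_G(\mathbb{C}^n) = \{ g(z) e^{-\sum_j z_j^2/2} : g \in F^2(\mathbb{C}^n)\}$, where $F^2(\mathbb{C}^n)$ is the Fock space with kernel $e^{\sum_j \overline{w_j} z_j}$. *)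

theory Defs
  imports "HOL-Analysis.Analysis"
begin

text \<open>For a positive definite kernel K on a set X, a function f lies in the RKHS H_K iff
  there is C with |sum_i c_i f(x_i)|^2 <= C * || sum_i conj(c_i) K(.,x_i) ||^2 for all finite
  point families and coefficients, and ||f||_{H_K}^2 is the least such C
  (Aronszajn; Saitoh).  Here || sum_i conj(c_i) K(.,x_i) ||^2 = sum_{i,j} conj(c_i) c_j K(x_j,x_i).\<close>

definition rkhs_bound_real :: "('a \<Rightarrow> 'a \<Rightarrow> real) \<Rightarrow> ('a \<Rightarrow> real) \<Rightarrow> real \<Rightarrow> bool" where
  "rkhs_bound_real K f C \<longleftrightarrow> C \<ge> 0 \<and>
     (\<forall>(m::nat) (x::nat \<Rightarrow> 'a) (c::nat \<Rightarrow> real).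
        (\<Sum>i<m. c i * f (x i))\<^sup>2 \<le> C * (\<Sum>i<m. \<Sum>j<m. c i * c j * K (x j) (x i)))"

definition rkhs_real :: "('a \<Rightarrow> 'a \<Rightarrow> real) \<Rightarrow> ('a \<Rightarrow> real) set" where
  "rkhs_real K = {f. \<exists>C. rkhs_bound_real K f C}"

definition rkhs_norm_real :: "('a \<Rightarrow> 'a \<Rightarrow> real) \<Rightarrow> ('a \<Rightarrow> real) \<Rightarrow> real" where
  "rkhs_norm_real K f = sqrt (Inf {C. rkhs_bound_real K f C})"

definition rkhs_bound_complex :: "('a \<Rightarrow> 'a \<Rightarrow> complex) \<Rightarrow> ('a \<Rightarrow> complex) \<Rightarrow> real \<Rightarrow> bool" where
  "rkhs_bound_complex K f C \<longleftrightarrow> C \<ge> 0 \<and>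
     (\<forall>(m::nat) (x::nat \<Rightarrow> 'a) (c::nat \<Rightarrow> complex).
        (cmod (\<Sum>i<m. c i * f (x i)))\<^sup>2 \<le>
          C * Re (\<Sum>i<m. \<Sum>j<m. cnj (c i) * c j * K (x j) (x i)))"

definition rkhs_complex :: "('a \<Rightarrow> 'a \<Rightarrow> complex) \<Rightarrow> ('a \<Rightarrow> complex) set" where
  "rkhs_complex K = {f. \<exists>C. rkhs_bound_complex K f C}"

definition rkhs_norm_complex :: "('a \<Rightarrow> 'a \<Rightarrow> complex) \<Rightarrow> ('a \<Rightarrow> complex) \<Rightarrow> real" where
  "rkhs_norm_complex K f = sqrt (Inf {C. rkhs_bound_complex K f C})"

definition gauss_kernel :: "real^'n \<Rightarrow> real^'n \<Rightarrow> real" where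
  "gauss_kernel x y = exp (- (norm (x - y))\<^sup>2 / 2)"

definition gauss_kernel_C :: "complex^'n \<Rightarrow> complex^'n \<Rightarrow> complex" where
  "gauss_kernel_C z w = exp (- (1/2) * (\<Sum>j\<in>UNIV. (z $ j - cnj (w $ j))\<^sup>2))"

abbreviation "native_gauss \<equiv> rkhs_real gauss_kernel"
abbreviation "H_G \<equiv> rkhs_complex gauss_kernel_C"

definition koopman_bounded_real :: "('a \<Rightarrow> 'a \<Rightarrow> real) \<Rightarrow> ('a \<Rightarrow> 'a) \<Rightarrow> bool" where
  "koopman_bounded_real K F \<longleftrightarrow>
     (\<exists>B. \<forall>g \<in> rkhs_real K. g \<circ> F \<in> rkhs_real K \<and>
            rkhs_norm_real K (g \<circ> F) \<le> B * rkhs_norm_real K g)"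

definition koopman_bounded_complex :: "('a \<Rightarrow> 'a \<Rightarrow> complex) \<Rightarrow> ('a \<Rightarrow> 'a) \<Rightarrow> bool" where
  "koopman_bounded_complex K F \<longleftrightarrow>
     (\<exists>B. \<forall>g \<in> rkhs_complex K. g \<circ> F \<in> rkhs_complex K \<and>
            rkhs_norm_complex K (g \<circ> F) \<le> B * rkhs_norm_complex K g)"

definition real_analytic_vec :: "(real^'n \<Rightarrow> real^'m) \<Rightarrow> bool" where
  "real_analytic_vec F \<longleftrightarrow>
     (\<forall>x0. \<exists>r>0. \<exists>a :: ('n \<Rightarrow> nat) \<Rightarrow> real^'m.
        \<forall>y \<in> ball x0 r.
          ((\<lambda>\<alpha>. (\<Prod>i\<in>UNIV. (y $ i - x0 $ i) ^ \<alpha> i) *\<^sub>R a \<alpha>) has_sum F y) UNIV)"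

definition entire_vec :: "(complex^'n \<Rightarrow> complex^'m) \<Rightarrow> bool" where
  "entire_vec F \<longleftrightarrow>
     (\<forall>z. \<exists>D. (F has_derivative D) (at z) \<and> (\<forall>(c::complex) v. D (c *s v) = c *s D v))"

definition cvec :: "real^'n \<Rightarrow> complex^'n" where
  "cvec x = (\<chi> i. complex_of_real (x $ i))"

end

theory Submission
  imports Defs "HOL-Complex_Analysis.Complex_Analysis"
begin

definition LN :: "nat \<Rightarrow> ('n::finite) list set" where
  "LN N = {xs. length xs = N}"

lemma LN_finite[simp]: "finite (LN N :: ('n::finite) list set)"
proof -
  have "LN N = {xs::'n list. set xs \<subseteq> UNIV \<and> length xs = N}" by (simp add: LN_def)
  thus ?thesis using finite_lists_length_eq[of "UNIV::'n set" N] by simp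
qed

lemma LN_card: "card (LN N :: ('n::finite) list set) = CARD('n)^N"
proof -
  have "LN N = {xs::'n list. set xs \<subseteq> UNIV \<and> length xs = N}" by (simp add: LN_def)
  thus ?thesis using card_lists_length_eq[of "UNIV::'n set" N] by simp
qed

lemma LN_Suc: "LN (Suc N) = (\<lambda>(j,xs). j # xs) ` (UNIV \<times> LN N)"
  unfolding LN_def
  by (auto simp: image_iff length_Suc_conv)

lemma sum_pow_lists:
  fixes u :: "'n::finite \<Rightarrow> 'a::comm_semiring_1"
  shows "(\<Sum>j\<in>UNIV. u j)^N = (\<Sum>\<iota>\<in>LN N. prod_list (map u \<iota>))"
proof (induction N)
  case 0
  then show ?case by (simp add: LN_def)
next
  case (Suc N)
  have inj: "inj_on (\<lambda>(j,xs). j # xs) (UNIV \<times> LN N)"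
    by (auto simp: inj_on_def)
  have "(\<Sum>\<iota>\<in>LN (Suc N). prod_list (map u \<iota>)) =
        (\<Sum>p\<in>UNIV \<times> LN N. prod_list (map u ((\<lambda>(j,xs). j # xs) p)))"
    unfolding LN_Suc by (subst sum.reindex[OF inj]) (simp add: o_def)
  also have "\<dots> = (\<Sum>j\<in>UNIV. \<Sum>xs\<in>LN N. u j * prod_list (map u xs))"
    by (simp add: sum.cartesian_product split_def)
  also have "\<dots> = (\<Sum>j\<in>UNIV. u j) * (\<Sum>xs\<in>LN N. prod_list (map u xs))"
    by (simp add: sum_product)
  finally show ?case using Suc by simp
qed

definition feat :: "('n::finite) list \<Rightarrow> complex^'n \<Rightarrow> complex" where
  "feat \<iota> z = exp (-(1/2) * (\<Sum>j\<in>UNIV. (z$j)^2)) * prod_list (map (\<lambda>j. z$j) \<iota>)"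

lemma prod_list_map_mult: "prod_list (map (\<lambda>j. f j * g j) xs) = prod_list (map f xs) * (prod_list (map g xs) :: 'a::comm_monoid_mult)"
  by (induction xs) (auto simp: algebra_simps)

lemma cnj_prod_list: "cnj (prod_list (map f xs)) = prod_list (map (\<lambda>j. cnj (f j)) xs)"
  by (induction xs) auto

lemma gauss_C_split:
  "gauss_kernel_C z w = exp (-(1/2) * (\<Sum>j\<in>UNIV. (z$j)^2)) * cnj (exp (-(1/2) * (\<Sum>j\<in>UNIV. (w$j)^2)))
      * exp (\<Sum>j\<in>UNIV. z$j * cnj (w$j))"
proof -
  have "- (1/2) * (\<Sum>j\<in>UNIV. (z $ j - cnj (w $ j))\<^sup>2) =
     (-(1/2) * (\<Sum>j\<in>UNIV. (z$j)^2)) + (-(1/2) * (\<Sum>j\<in>UNIV. (cnj (w$j))^2)) + (\<Sum>j\<in>UNIV. z$j * cnj (w$j))"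
  proof -
    have "(\<Sum>j\<in>UNIV. (z $ j - cnj (w $ j))\<^sup>2) = (\<Sum>j\<in>UNIV. (z$j)^2) + (\<Sum>j\<in>UNIV. (cnj (w$j))^2) - 2 * (\<Sum>j\<in>UNIV. z$j * cnj (w$j))"
      by (simp add: power2_diff sum.distrib sum_subtractf sum_distrib_left mult.assoc)
    thus ?thesis by (simp add: field_simps)
  qed
  hence "gauss_kernel_C z w = exp (-(1/2) * (\<Sum>j\<in>UNIV. (z$j)^2)) * exp (-(1/2) * (\<Sum>j\<in>UNIV. (cnj (w$j))^2)) * exp (\<Sum>j\<in>UNIV. z$j * cnj (w$j))"
    unfolding gauss_kernel_C_def by (simp only: exp_add)
  moreover have "cnj (exp (-(1/2) * (\<Sum>j\<in>UNIV. (w$j)^2))) = exp (-(1/2) * (\<Sum>j\<in>UNIV. (cnj (w$j))^2))"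
    by (simp add: exp_cnj)
  ultimately show ?thesis by simp
qed

lemma feat_sums:
  "(\<lambda>N. (\<Sum>\<iota>\<in>LN N. feat \<iota> z * cnj (feat \<iota> w)) / fact N) sums gauss_kernel_C z w"
proof -
  define s where "s = (\<Sum>j\<in>UNIV. z$j * cnj (w$j))"
  define ez where "ez = exp (-(1/2) * (\<Sum>j\<in>UNIV. (z$j)^2))"
  define ew where "ew = exp (-(1/2) * (\<Sum>j\<in>UNIV. (w$j)^2))"
  have "(\<lambda>N. s^N /\<^sub>R fact N) sums exp s" by (rule exp_converges)
  hence "(\<lambda>N. (ez * cnj ew) * (s^N /\<^sub>R fact N)) sums ((ez * cnj ew) * exp s)"
    by (rule sums_mult)
  moreover have "(ez * cnj ew) * (s^N /\<^sub>R fact N) = (\<Sum>\<iota>\<in>LN N. feat \<iota> z * cnj (feat \<iota> w)) / fact N" for N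
  proof -
    have "s^N = (\<Sum>\<iota>\<in>LN N. prod_list (map (\<lambda>j. z$j * cnj (w$j)) \<iota>))"
      unfolding s_def by (rule sum_pow_lists)
    also have "\<dots> = (\<Sum>\<iota>\<in>LN N. prod_list (map (\<lambda>j. z$j) \<iota>) * cnj (prod_list (map (\<lambda>j. w$j) \<iota>)))"
      by (simp add: prod_list_map_mult cnj_prod_list)
    finally have sN: "s^N = \<dots>" .
    have "(\<Sum>\<iota>\<in>LN N. feat \<iota> z * cnj (feat \<iota> w)) = (\<Sum>\<iota>\<in>LN N. (ez * cnj ew) * (prod_list (map (\<lambda>j. z$j) \<iota>) * cnj (prod_list (map (\<lambda>j. w$j) \<iota>))))"
      by (rule sum.cong) (simp_all add: feat_def ez_def ew_def mult_ac)
    also have "\<dots> = (ez * cnj ew) * s^N" using sN by (simp add: sum_distrib_left)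
    finally show ?thesis by (simp add: scaleR_conv_of_real divide_inverse mult_ac)
  qed
  moreover have "(ez * cnj ew) * exp s = gauss_kernel_C z w"
    by (simp add: gauss_C_split ez_def ew_def s_def)
  ultimately show ?thesis by simp
qed

lemma BF:
  "(\<lambda>N. (\<Sum>\<iota>\<in>LN N. (\<Sum>i<m. c i * feat \<iota> (z i)) * cnj (\<Sum>j<m'. d j * feat \<iota> (w j))) / fact N)
     sums (\<Sum>i<m. \<Sum>j<m'. c i * cnj (d j) * gauss_kernel_C (z i) (w j))"
proof -
  have "(\<lambda>N. \<Sum>i<m. \<Sum>j<m'. c i * cnj (d j) * ((\<Sum>\<iota>\<in>LN N. feat \<iota> (z i) * cnj (feat \<iota> (w j))) / fact N))
     sums (\<Sum>i<m. \<Sum>j<m'. c i * cnj (d j) * gauss_kernel_C (z i) (w j))"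
    by (intro sums_sum sums_mult feat_sums)
  moreover have "(\<Sum>i<m. \<Sum>j<m'. c i * cnj (d j) * ((\<Sum>\<iota>\<in>LN N. feat \<iota> (z i) * cnj (feat \<iota> (w j))) / fact N))
     = (\<Sum>\<iota>\<in>LN N. (\<Sum>i<m. c i * feat \<iota> (z i)) * cnj (\<Sum>j<m'. d j * feat \<iota> (w j))) / fact N" for N
  proof -
    have "(\<Sum>i<m. \<Sum>j<m'. c i * cnj (d j) * ((\<Sum>\<iota>\<in>LN N. feat \<iota> (z i) * cnj (feat \<iota> (w j))) / fact N))
       = (\<Sum>i<m. \<Sum>j<m'. \<Sum>\<iota>\<in>LN N. (c i * feat \<iota> (z i)) * cnj (d j * feat \<iota> (w j)) / fact N)"
      by (simp add: sum_distrib_left sum_divide_distrib mult_ac)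
    also have "\<dots> = (\<Sum>i<m. \<Sum>\<iota>\<in>LN N. \<Sum>j<m'. (c i * feat \<iota> (z i)) * cnj (d j * feat \<iota> (w j)) / fact N)"
      by (rule sum.cong[OF refl], rule sum.swap)
    also have "\<dots> = (\<Sum>\<iota>\<in>LN N. \<Sum>i<m. \<Sum>j<m'. (c i * feat \<iota> (z i)) * cnj (d j * feat \<iota> (w j)) / fact N)"
      by (rule sum.swap)
    also have "\<dots> = (\<Sum>\<iota>\<in>LN N. (\<Sum>i<m. c i * feat \<iota> (z i)) * cnj (\<Sum>j<m'. d j * feat \<iota> (w j))) / fact N"
      by (simp add: sum_divide_distrib sum_product)
    finally show ?thesis .
  qed
  ultimately show ?thesis by simp
qed

definition Qc :: "(nat \<Rightarrow> complex) \<Rightarrow> (nat \<Rightarrow> complex^'n) \<Rightarrow> nat \<Rightarrow> real" where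
  "Qc c z m = Re (\<Sum>i<m. \<Sum>j<m. cnj (c i) * c j * gauss_kernel_C (z j) (z i))"

definition Tt :: "(nat \<Rightarrow> complex) \<Rightarrow> (nat \<Rightarrow> complex^'n::finite) \<Rightarrow> nat \<Rightarrow> nat \<Rightarrow> real" where
  "Tt c z m N = (\<Sum>\<iota>\<in>LN N. (cmod (\<Sum>i<m. c i * feat \<iota> (z i)))^2) / fact N"

lemma Tt_nonneg: "Tt c z m N \<ge> 0"
  unfolding Tt_def by (intro divide_nonneg_pos sum_nonneg) auto

lemma QF: "Tt c z m sums Qc c z m"
proof -
  have "(\<lambda>N. Re ((\<Sum>\<iota>\<in>LN N. (\<Sum>i<m. c i * feat \<iota> (z i)) * cnj (\<Sum>j<m. c j * feat \<iota> (z j))) / fact N))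
     sums Re (\<Sum>i<m. \<Sum>j<m. c i * cnj (c j) * gauss_kernel_C (z i) (z j))"
    by (intro sums_Re BF)
  moreover have "Re ((\<Sum>\<iota>\<in>LN N. (\<Sum>i<m. c i * feat \<iota> (z i)) * cnj (\<Sum>j<m. c j * feat \<iota> (z j))) / fact N) = Tt c z m N" for N
  proof -
    have "(\<Sum>\<iota>\<in>LN N. (\<Sum>i<m. c i * feat \<iota> (z i)) * cnj (\<Sum>j<m. c j * feat \<iota> (z j))) / fact N
       = complex_of_real ((\<Sum>\<iota>\<in>LN N. (cmod (\<Sum>i<m. c i * feat \<iota> (z i)))^2) / fact N)"
      unfolding of_real_divide of_real_sum complex_norm_square by (simp del: cnj_sum)
    thus ?thesis unfolding Tt_def by (metis Re_complex_of_real)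
  qed
  moreover have "(\<Sum>i<m. \<Sum>j<m. c i * cnj (c j) * gauss_kernel_C (z i) (z j)) = (\<Sum>i<m. \<Sum>j<m. cnj (c i) * c j * gauss_kernel_C (z j) (z i))"
    by (subst sum.swap) (simp add: mult_ac)
  ultimately show ?thesis unfolding Qc_def by simp
qed

lemma Qc_nonneg: "Qc c z m \<ge> 0"
  by (rule sums_le[OF Tt_nonneg sums_zero QF])

definition Qr :: "(nat \<Rightarrow> real) \<Rightarrow> (nat \<Rightarrow> real^'n) \<Rightarrow> nat \<Rightarrow> real" where
  "Qr c x m = (\<Sum>i<m. \<Sum>j<m. c i * c j * gauss_kernel (x j) (x i))"

lemma gauss_sym: "gauss_kernel x y = gauss_kernel y x"
  by (simp add: gauss_kernel_def norm_minus_commute)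

lemma gauss_C_cvec: "gauss_kernel_C (cvec x) (cvec y) = complex_of_real (gauss_kernel x y)"
proof -
  have "(norm (x - y))^2 = (\<Sum>j\<in>UNIV. (x$j - y$j)^2)"
    by (simp only: power2_norm_eq_inner) (simp add: inner_vec_def power2_eq_square)
  hence "(\<Sum>j\<in>UNIV. (cvec x $ j - cnj (cvec y $ j))^2) = complex_of_real ((norm (x - y))^2)"
    by (simp add: cvec_def)
  thus ?thesis by (simp add: gauss_kernel_C_def gauss_kernel_def exp_of_real[symmetric])
qed

lemma Qc_cvec: "Qc c (\<lambda>i. cvec (x i)) m = Qr (\<lambda>i. Re (c i)) x m + Qr (\<lambda>i. Im (c i)) x m"
  unfolding Qc_def Qr_def gauss_C_cvec
  by (simp add: Re_sum sum.distrib[symmetric] algebra_simps)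

lemma Qr_Qc: "Qr b x m = Qc (\<lambda>i. complex_of_real (b i)) (\<lambda>i. cvec (x i)) m"
  by (simp add: Qc_cvec Qr_def)

lemma Qr_nonneg: "Qr b x m \<ge> 0"
  using Qr_Qc Qc_nonneg by metis

lemma discr:
  fixes a b x :: real
  assumes "\<And>t. 0 \<le> a + 2*t*x + t^2*b" "b \<ge> 0"
  shows "x^2 \<le> a*b"
proof (cases "b = 0")
  case True
  have "x = 0"
  proof (rule ccontr)
    assume "x \<noteq> 0"
    have "0 \<le> a + 2*(-(abs a + 1)/(2*x))*x + (-(abs a + 1)/(2*x))^2*b" by (rule assms(1))
    also have "\<dots> = a - (abs a + 1)" using True \<open>x \<noteq> 0\<close> by (simp add: field_simps)
    finally show False by linarith
  qed
  thus ?thesis using True by simp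
next
  case False
  hence "b > 0" using assms by simp
  have "0 \<le> a + 2*(-x/b)*x + (-x/b)^2*b" by (rule assms(1))
  also have "\<dots> = a - x^2/b" using \<open>b > 0\<close> by (simp add: field_simps power2_eq_square)
  finally show ?thesis using \<open>b > 0\<close> by (simp add: field_simps)
qed

lemma sum_quad: "(\<Sum>\<iota>\<in>S. A \<iota> + 2*t*B \<iota> + t^2*C \<iota>) / (f::real) = (\<Sum>\<iota>\<in>S. A \<iota>)/f + 2*t*((\<Sum>\<iota>\<in>S. B \<iota>)/f) + t^2*((\<Sum>\<iota>\<in>S. C \<iota>)/f)"
  by (simp add: sum.distrib sum_distrib_left add_divide_distrib)

lemma CS_real:
  fixes b c :: "nat \<Rightarrow> real" and u y :: "nat \<Rightarrow> real^'n"
  shows "(\<Sum>i<m. c i * (\<Sum>j<m'. b j * gauss_kernel (y i) (u j)))^2 \<le> Qr c y m * Qr b u m'"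
proof -
  define c' where "c' = (\<lambda>i. complex_of_real (c i))"
  define b' where "b' = (\<lambda>i. complex_of_real (b i))"
  define Y where "Y = (\<lambda>i. cvec (y i))"
  define U where "U = (\<lambda>i. cvec (u i))"
  define SU where "SU = (\<lambda>\<iota>. (\<Sum>i<m. c' i * feat \<iota> (Y i)))"
  define SV where "SV = (\<lambda>\<iota>. (\<Sum>j<m'. b' j * feat \<iota> (U j)))"
  define X where "X = (\<Sum>i<m. c i * (\<Sum>j<m'. b j * gauss_kernel (y i) (u j)))"
  have g: "(\<lambda>N. (\<Sum>\<iota>\<in>LN N. SU \<iota> * cnj (SV \<iota>)) / fact N) sums complex_of_real X"
  proof -
    have "(\<lambda>N. (\<Sum>\<iota>\<in>LN N. SU \<iota> * cnj (SV \<iota>)) / fact N) sums (\<Sum>i<m. \<Sum>j<m'. c' i * cnj (b' j) * gauss_kernel_C (Y i) (U j))"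
      unfolding SU_def SV_def by (rule BF)
    moreover have "(\<Sum>i<m. \<Sum>j<m'. c' i * cnj (b' j) * gauss_kernel_C (Y i) (U j)) = complex_of_real X"
      by (simp add: X_def c'_def b'_def Y_def U_def gauss_C_cvec sum_distrib_left mult_ac)
    ultimately show ?thesis by simp
  qed
  hence gR: "(\<lambda>N. Re ((\<Sum>\<iota>\<in>LN N. SU \<iota> * cnj (SV \<iota>)) / fact N)) sums X"
    using sums_Re by fastforce
  have a: "Tt c' Y m sums Qr c y m" using QF[of c' Y m] by (simp add: Qr_Qc c'_def Y_def)
  have bb: "Tt b' U m' sums Qr b u m'" using QF[of b' U m'] by (simp add: Qr_Qc b'_def U_def)
  have "0 \<le> Qr c y m + 2*t*X + t^2 * Qr b u m'" for t
  proof -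
    have "(\<lambda>N. Tt c' Y m N + 2*t*Re ((\<Sum>\<iota>\<in>LN N. SU \<iota> * cnj (SV \<iota>)) / fact N) + t^2 * Tt b' U m' N)
       sums (Qr c y m + 2*t*X + t^2 * Qr b u m')"
      by (rule sums_add[OF sums_add[OF a sums_mult[OF gR]] sums_mult[OF bb]])
    moreover have "Tt c' Y m N + 2*t*Re ((\<Sum>\<iota>\<in>LN N. SU \<iota> * cnj (SV \<iota>)) / fact N) + t^2 * Tt b' U m' N
        = (\<Sum>\<iota>\<in>LN N. (cmod (SU \<iota> + of_real t * SV \<iota>))^2) / fact N" for N
    proof -
      have e: "(cmod (p + of_real t * q))^2 = (cmod p)^2 + 2*t*Re (p * cnj q) + t^2 * (cmod q)^2" for p q :: complex
        unfolding cmod_power2 by (simp add: power2_eq_square algebra_simps)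
      have t1: "Tt c' Y m N = (\<Sum>\<iota>\<in>LN N. (cmod (SU \<iota>))^2) / fact N" by (simp add: Tt_def SU_def)
      have t2: "Tt b' U m' N = (\<Sum>\<iota>\<in>LN N. (cmod (SV \<iota>))^2) / fact N" by (simp add: Tt_def SV_def)
      have t3: "Re ((\<Sum>\<iota>\<in>LN N. SU \<iota> * cnj (SV \<iota>)) / fact N) = (\<Sum>\<iota>\<in>LN N. Re (SU \<iota> * cnj (SV \<iota>))) / fact N"
      proof -
        have fN: "(fact N :: complex) = complex_of_real (fact N)" by simp
        show ?thesis by (subst fN, simp only: Re_divide_of_real Re_sum)
      qed
      show ?thesis unfolding t1 t2 t3 e by (rule sum_quad[symmetric])
    qed
    ultimately have S: "(\<lambda>N. (\<Sum>\<iota>\<in>LN N. (cmod (SU \<iota> + of_real t * SV \<iota>))^2) / fact N) sums (Qr c y m + 2*t*X + t^2 * Qr b u m')"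
      by simp
    have P: "\<And>N. 0 \<le> (\<Sum>\<iota>\<in>LN N. (cmod (SU \<iota> + of_real t * SV \<iota>))^2) / fact N"
      by (auto intro!: divide_nonneg_pos sum_nonneg)
    show ?thesis by (rule sums_le[OF P sums_zero S])
  qed
  hence "X^2 \<le> Qr c y m * Qr b u m'" by (rule discr[OF _ Qr_nonneg])
  thus ?thesis unfolding X_def .
qed

abbreviation "BS f \<equiv> {C. rkhs_bound_real gauss_kernel f C}"

lemma BS_bdd: "bdd_below (BS f)"
  unfolding rkhs_bound_real_def by (rule bdd_belowI[of _ 0]) auto

lemma Inf_BS_nonneg: "f \<in> rkhs_real gauss_kernel \<Longrightarrow> Inf (BS f) \<ge> 0"
proof -
  assume "f \<in> rkhs_real gauss_kernel"
  hence ne: "BS f \<noteq> {}" unfolding rkhs_real_def by auto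
  have "\<And>x. x \<in> BS f \<Longrightarrow> 0 \<le> x" by (simp add: rkhs_bound_real_def)
  thus ?thesis using cInf_greatest[OF ne] by blast
qed

lemma norm_real_sq: "f \<in> rkhs_real gauss_kernel \<Longrightarrow> (rkhs_norm_real gauss_kernel f)^2 = Inf (BS f)"
  unfolding rkhs_norm_real_def using Inf_BS_nonneg[of f] by simp

lemma norm_real_nonneg: "f \<in> rkhs_real gauss_kernel \<Longrightarrow> rkhs_norm_real gauss_kernel f \<ge> 0"
  unfolding rkhs_norm_real_def using Inf_BS_nonneg by simp

lemma norm_real_le: "rkhs_bound_real gauss_kernel f C \<Longrightarrow> (rkhs_norm_real gauss_kernel f)^2 \<le> C"
proof -
  assume a: "rkhs_bound_real gauss_kernel f C"
  hence "f \<in> rkhs_real gauss_kernel" unfolding rkhs_real_def by auto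
  hence "(rkhs_norm_real gauss_kernel f)^2 = Inf (BS f)" by (rule norm_real_sq)
  also have "\<dots> \<le> C" using a by (intro cInf_lower[OF _ BS_bdd]) simp
  finally show ?thesis .
qed

lemma bound_Inf:
  assumes "f \<in> rkhs_real gauss_kernel"
  shows "(\<Sum>i<m. c i * f (x i))^2 \<le> (rkhs_norm_real gauss_kernel f)^2 * Qr c x m"
proof -
  obtain C0 where C0: "rkhs_bound_real gauss_kernel f C0" using assms unfolding rkhs_real_def by auto
  have bnd: "(\<Sum>i<m. c i * f (x i))^2 \<le> C * Qr c x m" if "rkhs_bound_real gauss_kernel f C" for C
    using that unfolding rkhs_bound_real_def Qr_def by blast
  show ?thesis
  proof (cases "Qr c x m = 0")
    case True
    thus ?thesis using bnd[OF C0] by simp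
  next
    case False
    hence pos: "Qr c x m > 0" using Qr_nonneg[of c x m] by linarith
    have "(\<Sum>i<m. c i * f (x i))^2 / Qr c x m \<le> Inf (BS f)"
    proof (rule cInf_greatest)
      show "BS f \<noteq> {}" using C0 by auto
      fix C assume "C \<in> BS f"
      thus "(\<Sum>i<m. c i * f (x i))^2 / Qr c x m \<le> C" using bnd pos by (simp add: divide_le_eq)
    qed
    thus ?thesis using pos norm_real_sq[OF assms] by (simp add: divide_le_eq)
  qed
qed

lemma real_dom:
  assumes "koopman_bounded_real gauss_kernel F"
  obtains B :: real where "B \<ge> 0" "\<And>m b x. Qr b (\<lambda>i. F (x i)) m \<le> B^2 * Qr b x m"
proof -
  obtain B0 where B0: "\<And>g. g \<in> rkhs_real gauss_kernel \<Longrightarrow> g \<circ> F \<in> rkhs_real gauss_kernel \<and>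
      rkhs_norm_real gauss_kernel (g \<circ> F) \<le> B0 * rkhs_norm_real gauss_kernel g"
    using assms unfolding koopman_bounded_real_def by blast
  have "Qr b (\<lambda>i. F (x i)) m \<le> B0^2 * Qr b x m" for m b x
  proof -
    define u where "u = (\<lambda>i. F (x i))"
    define g where "g = (\<lambda>y. \<Sum>j<m. b j * gauss_kernel y (u j))"
    have gb: "rkhs_bound_real gauss_kernel g (Qr b u m)"
      unfolding rkhs_bound_real_def
    proof (intro conjI allI)
      show "0 \<le> Qr b u m" by (rule Qr_nonneg)
      fix m' :: nat and y :: "nat \<Rightarrow> real^'a" and c :: "nat \<Rightarrow> real"
      have "(\<Sum>i<m'. c i * g (y i))^2 \<le> Qr c y m' * Qr b u m" unfolding g_def by (rule CS_real)
      thus "(\<Sum>i<m'. c i * g (y i))\<^sup>2 \<le> Qr b u m * (\<Sum>i<m'. \<Sum>j<m'. c i * c j * gauss_kernel (y j) (y i))"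
        by (simp add: Qr_def mult_ac)
    qed
    hence gin: "g \<in> rkhs_real gauss_kernel" unfolding rkhs_real_def by auto
    have ng: "(rkhs_norm_real gauss_kernel g)^2 \<le> Qr b u m" by (rule norm_real_le[OF gb])
    from B0[OF gin] have gF: "g \<circ> F \<in> rkhs_real gauss_kernel"
      and ngF: "rkhs_norm_real gauss_kernel (g \<circ> F) \<le> B0 * rkhs_norm_real gauss_kernel g" by auto
    have ngF2: "(rkhs_norm_real gauss_kernel (g \<circ> F))^2 \<le> B0^2 * (rkhs_norm_real gauss_kernel g)^2"
    proof -
      have "(rkhs_norm_real gauss_kernel (g \<circ> F))^2 \<le> (B0 * rkhs_norm_real gauss_kernel g)^2"
        by (rule power_mono[OF ngF norm_real_nonneg[OF gF]])
      thus ?thesis by (simp add: power_mult_distrib)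
    qed
    have eq: "(\<Sum>i<m. b i * (g \<circ> F) (x i)) = Qr b u m"
      unfolding g_def Qr_def u_def o_def
      by (simp add: sum_distrib_left mult_ac gauss_sym)
    have "(Qr b u m)^2 \<le> (rkhs_norm_real gauss_kernel (g \<circ> F))^2 * Qr b x m"
      using bound_Inf[OF gF, of b x m] eq by simp
    also have "\<dots> \<le> B0^2 * (rkhs_norm_real gauss_kernel g)^2 * Qr b x m"
      by (rule mult_right_mono[OF ngF2 Qr_nonneg])
    also have "\<dots> \<le> B0^2 * Qr b u m * Qr b x m"
      by (intro mult_right_mono mult_left_mono ng Qr_nonneg) simp_all
    finally have *: "(Qr b u m)^2 \<le> B0^2 * Qr b u m * Qr b x m" .
    show ?thesis
    proof (cases "Qr b u m = 0")
      case True thus ?thesis using Qr_nonneg[of b x m] u_def by simp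
    next
      case False
      hence "Qr b u m > 0" using Qr_nonneg[of b u m] by linarith
      thus ?thesis using * u_def by (simp add: power2_eq_square mult_ac)
    qed
  qed
  thus ?thesis using that[of "abs B0"] by simp
qed

abbreviation "BSc f \<equiv> {C. rkhs_bound_complex gauss_kernel_C f C}"

lemma complex_conclusion:
  fixes Fc :: "complex^'n \<Rightarrow> complex^'n"
  assumes B: "B > 0" and dom: "\<And>m c z. Qc c (\<lambda>i. Fc (z i)) m \<le> B^2 * Qc c z m"
  shows "koopman_bounded_complex gauss_kernel_C Fc"
  unfolding koopman_bounded_complex_def
proof (intro exI ballI conjI)
  fix g :: "complex^'n \<Rightarrow> complex" assume "g \<in> rkhs_complex gauss_kernel_C"
  then obtain C0 where C0: "rkhs_bound_complex gauss_kernel_C g C0" unfolding rkhs_complex_def by auto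
  have trans: "rkhs_bound_complex gauss_kernel_C (g \<circ> Fc) (B^2 * C)" if "rkhs_bound_complex gauss_kernel_C g C" for C
    unfolding rkhs_bound_complex_def
  proof (intro conjI allI)
    have C: "C \<ge> 0" and bnd: "\<And>m x c. (cmod (\<Sum>i<m. c i * g (x i)))^2 \<le> C * Qc c x m"
      using that unfolding rkhs_bound_complex_def Qc_def by auto
    show "0 \<le> B^2 * C" using C by simp
    fix m :: nat and z :: "nat \<Rightarrow> complex^'n" and c :: "nat \<Rightarrow> complex"
    have "(cmod (\<Sum>i<m. c i * (g \<circ> Fc) (z i)))^2 \<le> C * Qc c (\<lambda>i. Fc (z i)) m"
      using bnd[where m=m and c=c and x="\<lambda>i. Fc (z i)"] by simp
    also have "\<dots> \<le> C * (B^2 * Qc c z m)" by (rule mult_left_mono[OF dom C])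
    finally show "(cmod (\<Sum>i<m. c i * (g \<circ> Fc) (z i)))\<^sup>2 \<le> B^2 * C * Re (\<Sum>i<m. \<Sum>j<m. cnj (c i) * c j * gauss_kernel_C (z j) (z i))"
      by (simp add: Qc_def mult_ac)
  qed
  show "g \<circ> Fc \<in> rkhs_complex gauss_kernel_C" using trans[OF C0] unfolding rkhs_complex_def by auto
  have bdd: "bdd_below (BSc f)" for f :: "complex^'n \<Rightarrow> complex"
    unfolding rkhs_bound_complex_def by (rule bdd_belowI[of _ 0]) auto
  have ne: "BSc g \<noteq> {}" using C0 by auto
  have I0: "Inf (BSc g) \<ge> 0"
  proof -
    have "\<And>x. x \<in> BSc g \<Longrightarrow> 0 \<le> x" by (simp add: rkhs_bound_complex_def)
    thus ?thesis using cInf_greatest[OF ne] by blast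
  qed
  have "Inf (BSc (g \<circ> Fc)) / B^2 \<le> Inf (BSc g)"
  proof -
    have "\<And>C. C \<in> BSc g \<Longrightarrow> Inf (BSc (g \<circ> Fc)) / B^2 \<le> C"
    proof -
      fix C assume "C \<in> BSc g"
      hence "Inf (BSc (g \<circ> Fc)) \<le> B^2 * C" using trans by (intro cInf_lower[OF _ bdd]) simp
      thus "Inf (BSc (g \<circ> Fc)) / B^2 \<le> C" using B by (simp add: divide_le_eq mult_ac)
    qed
    thus ?thesis using cInf_greatest[OF ne] by blast
  qed
  hence "Inf (BSc (g \<circ> Fc)) \<le> B^2 * Inf (BSc g)" using B by (simp add: divide_le_eq mult_ac)
  hence "sqrt (Inf (BSc (g \<circ> Fc))) \<le> sqrt (B^2 * Inf (BSc g))" by (rule real_sqrt_le_mono)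
  also have "\<dots> = B * sqrt (Inf (BSc g))" using B by (simp add: real_sqrt_mult)
  finally show "rkhs_norm_complex gauss_kernel_C (g \<circ> Fc) \<le> B * rkhs_norm_complex gauss_kernel_C g"
    unfolding rkhs_norm_complex_def .
qed

definition sig :: "nat \<Rightarrow> nat \<Rightarrow> real \<Rightarrow> real" where
  "sig p j c = (\<Sum>a\<le>p. (-1)^(p-a) * real (p choose a) * (real a + c)^j)"

lemma sig_0: "sig p 0 c = (if p = 0 then 1 else 0)"
proof (cases "p = 0")
  case True thus ?thesis by (simp add: sig_def)
next
  case False
  have "sig p 0 c = (\<Sum>a\<le>p. (-1)^p * ((-1)^a * real (p choose a)))"
    unfolding sig_def
  proof (rule sum.cong[OF refl])
    fix a assume "a \<in> {..p}"
    hence "a \<le> p" by simp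
    hence "(-1::real)^(p-a) = (-1)^p * (-1)^a"
      by (metis neg_one_power_add_eq_neg_one_power_diff power_add)
    thus "(-1)^(p-a) * real (p choose a) * (real a + c)^0 = (-1)^p * ((-1)^a * real (p choose a))" by simp
  qed
  also have "\<dots> = (-1)^p * (\<Sum>a\<le>p. (-1)^a * real (p choose a))" by (simp add: sum_distrib_left)
  also have "(\<Sum>a\<le>p. (-1)^a * real (p choose a)) = 0"
    using choose_alternating_sum[of p] False by simp
  finally show ?thesis using False by simp
qed

lemma sig_rec: "sig (Suc q) (Suc j) c = real (Suc q) * sig q j (c + 1) + c * sig (Suc q) j c"
proof -
  have "sig (Suc q) (Suc j) c = (\<Sum>a\<le>Suc q. (-1)^(Suc q-a) * real (Suc q choose a) * real a * (real a + c)^j)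
       + c * sig (Suc q) j c"
  proof -
    have "sig (Suc q) (Suc j) c = (\<Sum>a\<le>Suc q. (-1)^(Suc q-a) * real (Suc q choose a) * real a * (real a + c)^j + c * ((-1)^(Suc q-a) * real (Suc q choose a) * (real a + c)^j))"
      unfolding sig_def by (rule sum.cong[OF refl]) (simp add: algebra_simps del: binomial_Suc_Suc)
    thus ?thesis unfolding sig_def by (simp only: sum.distrib sum_distrib_left)
  qed
  also have "(\<Sum>a\<le>Suc q. (-1)^(Suc q-a) * real (Suc q choose a) * real a * (real a + c)^j)
      = (\<Sum>b\<le>q. (-1)^(Suc q - Suc b) * real (Suc q choose Suc b) * real (Suc b) * (real (Suc b) + c)^j)"
    by (subst sum.atMost_Suc_shift) simp
  also have "\<dots> = (\<Sum>b\<le>q. real (Suc q) * ((-1)^(q - b) * real (q choose b) * (real b + (c + 1))^j))"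
  proof (rule sum.cong[OF refl])
    fix b
    have h: "real (Suc q choose Suc b) * real (Suc b) = real (Suc q) * real (q choose b)"
      using Suc_times_binomial_eq[of q b] by (metis of_nat_mult mult.commute)
    have e1: "(real (Suc b) + c) = real b + (c + 1)" by simp
    show "(-1)^(Suc q - Suc b) * real (Suc q choose Suc b) * real (Suc b) * (real (Suc b) + c)^j
        = real (Suc q) * ((-1)^(q - b) * real (q choose b) * (real b + (c + 1))^j)"
      unfolding e1 diff_Suc_Suc by (metis h mult.assoc mult.left_commute)
  qed
  also have "\<dots> = real (Suc q) * sig q j (c + 1)" by (simp add: sig_def sum_distrib_left)
  finally show ?thesis .
qed

lemma sig_main: "(\<forall>p c. j < p \<longrightarrow> sig p j c = 0) \<and> (\<forall>c. sig j j c = fact j)"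
proof (induction j)
  case 0
  then show ?case by (simp add: sig_0)
next
  case (Suc j)
  have A: "sig p (Suc j) c = 0" if jp: "Suc j < p" for p c
  proof -
    obtain q where q: "p = Suc q" using jp by (cases p) auto
    have "j < q" "j < p" using jp q by auto
    thus ?thesis using Suc q by (simp add: sig_rec)
  qed
  have B: "sig (Suc j) (Suc j) c = fact (Suc j)" for c
    using Suc by (simp add: sig_rec)
  show ?case using A B by blast
qed

lemma sig_lt: "j < p \<Longrightarrow> sig p j 0 = 0" using sig_main by blast
lemma sig_eq: "sig p p 0 = fact p" using sig_main by blast

lemma sig_bound: "\<bar>sig p j 0\<bar> \<le> 2^p * real p ^ j"
proof -
  have "\<bar>sig p j 0\<bar> \<le> (\<Sum>a\<le>p. \<bar>(-1)^(p-a) * real (p choose a) * (real a)^j\<bar>)"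
    unfolding sig_def by (simp add: sum_abs)
  also have "\<dots> \<le> (\<Sum>a\<le>p. real (p choose a) * real p ^ j)"
    by (intro sum_mono) (auto simp: abs_mult power_abs intro!: mult_left_mono power_mono)
  also have "\<dots> = 2^p * real p ^ j"
    by (simp add: sum_distrib_right[symmetric] choose_row_sum flip: of_nat_sum)
  finally show ?thesis .
qed

definition tc :: "(complex \<Rightarrow> complex) \<Rightarrow> nat \<Rightarrow> complex" where
  "tc G p = (deriv ^^ p) G 0 / fact p"

definition dlt :: "(complex \<Rightarrow> complex) \<Rightarrow> nat \<Rightarrow> real \<Rightarrow> complex" where
  "dlt G p h = (\<Sum>a\<le>p. complex_of_real ((-1)^(p-a) * real (p choose a)) * G (complex_of_real (real a * h)))
               / complex_of_real (fact p * h^p)"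

lemma tc_bound:
  assumes "G holomorphic_on UNIV" "R > 0" "\<And>s. cmod s \<le> R \<Longrightarrow> cmod (G s) \<le> M"
  shows "cmod (tc G p) \<le> M / R^p"
proof -
  have "norm ((deriv ^^ p) G 0) \<le> fact p * M / R^p"
  proof (rule Cauchy_inequality)
    show "G holomorphic_on ball 0 R" using assms(1) by (rule holomorphic_on_subset) auto
    show "continuous_on (cball 0 R) G"
      using holomorphic_on_imp_continuous_on[OF assms(1)] by (rule continuous_on_subset) auto
    show "0 < R" by fact
    fix x :: complex assume "norm (0 - x) = R"
    thus "norm (G x) \<le> M" using assms(3)[of x] by simp
  qed
  thus ?thesis unfolding tc_def by (simp add: norm_divide divide_le_eq field_simps)
qed

lemma tc_sums:
  assumes "G holomorphic_on UNIV"
  shows "(\<lambda>j. tc G j * s^j) sums G s"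
proof -
  have "(\<lambda>n. (deriv ^^ n) G 0 / fact n * (s - 0)^n) sums G s"
    by (rule holomorphic_power_series[of G 0 "cmod s + 1"]) (auto intro: holomorphic_on_subset[OF assms])
  thus ?thesis by (simp add: tc_def)
qed

lemma dlt_sums:
  assumes "G holomorphic_on UNIV" "h > 0"
  shows "(\<lambda>j. tc G j * complex_of_real (h^j * sig p j 0 / (fact p * h^p))) sums dlt G p h"
proof -
  define w where "w = (\<lambda>a. complex_of_real ((-1)^(p-a) * real (p choose a)))"
  have "(\<lambda>j. \<Sum>a\<le>p. w a * (tc G j * (complex_of_real (real a * h))^j)) sums (\<Sum>a\<le>p. w a * G (complex_of_real (real a * h)))"
    by (intro sums_sum sums_mult tc_sums assms)
  moreover have "(\<Sum>a\<le>p. w a * (tc G j * (complex_of_real (real a * h))^j)) = tc G j * complex_of_real (h^j * sig p j 0)" for j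
  proof -
    have "(\<Sum>a\<le>p. w a * (tc G j * (complex_of_real (real a * h))^j)) = tc G j * complex_of_real (\<Sum>a\<le>p. (-1)^(p-a) * real (p choose a) * (real a * h)^j)"
      by (simp add: w_def sum_distrib_left mult_ac)
    also have "(\<Sum>a\<le>p. (-1)^(p-a) * real (p choose a) * (real a * h)^j) = h^j * sig p j 0"
      by (simp add: sig_def sum_distrib_left power_mult_distrib mult_ac)
    finally show ?thesis .
  qed
  ultimately have "(\<lambda>j. tc G j * complex_of_real (h^j * sig p j 0)) sums (\<Sum>a\<le>p. w a * G (complex_of_real (real a * h)))"
    by simp
  hence "(\<lambda>j. tc G j * complex_of_real (h^j * sig p j 0) / complex_of_real (fact p * h^p)) sums dlt G p h"
    unfolding dlt_def w_def by (rule sums_divide)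
  thus ?thesis by (simp add: divide_inverse mult_ac)
qed

lemma dlt_bound:
  assumes hol: "G holomorphic_on UNIV" and h: "0 < h" "h \<le> 1" and R: "R > 0" "2 * real p \<le> R"
    and M: "\<And>s. cmod s \<le> R \<Longrightarrow> cmod (G s) \<le> M"
  shows "cmod (dlt G p h - tc G p) \<le> h * M * 2^(p+1)"
proof -
  have "cmod (G 0) \<le> M" using M[of 0] R by simp
  hence M0: "M \<ge> 0" using norm_ge_zero order_trans by blast
  define t where "t = (\<lambda>j. tc G j * complex_of_real (h^j * sig p j 0 / (fact p * h^p)))"
  define e where "e = (\<lambda>j. t j - (if j = p then tc G p else 0))"
  have ts: "t sums dlt G p h" unfolding t_def by (rule dlt_sums[OF hol h(1)])
  have es: "e sums (dlt G p h - tc G p)"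
    unfolding e_def by (rule sums_diff[OF ts]) (rule sums_single)
  have ebound: "norm (e j) \<le> h * M * 2^p * (1/2)^j" for j
  proof (cases "j \<le> p")
    case True
    hence "e j = 0"
    proof (cases "j = p")
      case True thus ?thesis using h by (simp add: e_def t_def sig_eq)
    next
      case False thus ?thesis using \<open>j \<le> p\<close> by (simp add: e_def t_def sig_lt)
    qed
    thus ?thesis using M0 h by simp
  next
    case False
    hence jp: "p < j" by simp
    have "e j = t j" using jp by (simp add: e_def)
    hence "norm (e j) = cmod (tc G j) * \<bar>h^j * sig p j 0 / (fact p * h^p)\<bar>"
      unfolding t_def by (simp only: norm_mult norm_of_real)
    also have "\<bar>h^j * sig p j 0 / (fact p * h^p)\<bar> \<le> h * 2^p * real p ^ j"
    proof -
      have "\<bar>h^j * sig p j 0 / (fact p * h^p)\<bar> = h^(j-p) * \<bar>sig p j 0\<bar> / fact p"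
        using h jp by (simp add: abs_mult power_diff)
      also have "\<dots> \<le> h^(j-p) * \<bar>sig p j 0\<bar>"
      proof -
        have f1: "fact p \<ge> (1::real)" by (rule fact_ge_1)
        have nn: "0 \<le> h^(j-p) * \<bar>sig p j 0\<bar>" using h by simp
        have "h^(j-p) * \<bar>sig p j 0\<bar> * 1 \<le> h^(j-p) * \<bar>sig p j 0\<bar> * fact p" by (rule mult_left_mono[OF f1 nn])
        thus ?thesis using f1 by (simp add: divide_le_eq)
      qed
      also have "\<dots> \<le> h * (2^p * real p ^ j)"
      proof (rule mult_mono)
        obtain k where k: "j - p = Suc k" using jp by (cases "j - p") auto
        have "h * h^k \<le> h * 1" using h by (intro mult_left_mono power_le_one) auto
        thus "h^(j-p) \<le> h" unfolding k by simp
      qed (use sig_bound h in auto)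
      finally show ?thesis by simp
    qed
    hence "cmod (tc G j) * \<bar>h^j * sig p j 0 / (fact p * h^p)\<bar> \<le> (M / R^j) * (h * 2^p * real p ^ j)"
      using M0 R by (intro mult_mono tc_bound[OF hol R(1) M]) auto
    also have "\<dots> = h * M * 2^p * (real p / R)^j" by (simp add: power_divide)
    also have "\<dots> \<le> h * M * 2^p * (1/2)^j"
      using R h M0 by (intro mult_left_mono power_mono) (auto simp: divide_le_eq)
    finally show ?thesis .
  qed
  have sg: "summable (\<lambda>j. h * M * 2^p * (1/2::real)^j)" by (intro summable_mult summable_geometric) simp
  have sn: "summable (\<lambda>j. norm (e j))" by (rule summable_comparison_test[OF _ sg]) (use ebound in auto)
  have "norm (dlt G p h - tc G p) = norm (suminf e)" using es by (simp add: sums_iff)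
  also have "\<dots> \<le> (\<Sum>j. norm (e j))" by (rule summable_norm[OF sn])
  also have "\<dots> \<le> (\<Sum>j. h * M * 2^p * (1/2::real)^j)" by (rule suminf_le[OF ebound sn sg])
  also have "\<dots> = h * M * 2^(p+1)" by (simp add: suminf_mult suminf_geometric)
  finally show ?thesis .
qed

definition ell :: "nat \<Rightarrow> real \<Rightarrow> (complex \<Rightarrow> complex) \<Rightarrow> complex" where
  "ell N0 h G = (\<Sum>p<N0. \<i>^p * dlt G p h)"

definition tau :: "nat \<Rightarrow> (complex \<Rightarrow> complex) \<Rightarrow> complex" where
  "tau N0 G = (\<Sum>p<N0. \<i>^p * tc G p)"

lemma sum_pow2: "(\<Sum>p<N0. (2::real)^(p+1)) \<le> 2^(N0+1)"
  by (induction N0) auto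

lemma ell_tau:
  assumes hol: "G holomorphic_on UNIV" and h: "0 < h" "h \<le> 1" and R: "R > 0" "2 * real N0 \<le> R"
    and M: "\<And>s. cmod s \<le> R \<Longrightarrow> cmod (G s) \<le> M"
  shows "cmod (ell N0 h G - tau N0 G) \<le> h * M * 2^(N0+1)"
proof -
  have "cmod (G 0) \<le> M" using M[of 0] R by simp
  hence M0: "M \<ge> 0" using norm_ge_zero order_trans by blast
  have "ell N0 h G - tau N0 G = (\<Sum>p<N0. \<i>^p * (dlt G p h - tc G p))"
    by (simp add: ell_def tau_def sum_subtractf algebra_simps)
  also have "cmod \<dots> \<le> (\<Sum>p<N0. cmod (\<i>^p * (dlt G p h - tc G p)))" by (rule norm_sum)
  also have "\<dots> \<le> (\<Sum>p<N0. h * M * 2^(p+1))"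
  proof (rule sum_mono)
    fix p assume "p \<in> {..<N0}"
    hence "2 * real p \<le> R" using R by simp
    thus "cmod (\<i>^p * (dlt G p h - tc G p)) \<le> h * M * 2^(p+1)"
      using dlt_bound[OF hol h R(1) _ M] by (simp add: norm_mult norm_power)
  qed
  also have "\<dots> = h * M * (\<Sum>p<N0. 2^(p+1))" by (simp add: sum_distrib_left)
  also have "\<dots> \<le> h * M * 2^(N0+1)" using h M0 by (intro mult_left_mono sum_pow2) auto
  finally show ?thesis .
qed

lemma tau_bound:
  assumes hol: "G holomorphic_on UNIV" and R: "R \<ge> 2"
    and M: "\<And>s. cmod s \<le> R \<Longrightarrow> cmod (G s) \<le> M"
  shows "cmod (tau N0 G) \<le> 2 * M"
proof -
  have "cmod (G 0) \<le> M" using M[of 0] R by simp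
  hence M0: "M \<ge> 0" using norm_ge_zero order_trans by blast
  have "cmod (tau N0 G) \<le> (\<Sum>p<N0. cmod (\<i>^p * tc G p))" unfolding tau_def by (rule norm_sum)
  also have "\<dots> \<le> (\<Sum>p<N0. M * (1/2)^p)"
  proof (rule sum_mono)
    fix p
    have "cmod (tc G p) \<le> M / R^p" using tc_bound[OF hol _ M] R by simp
    also have "\<dots> \<le> M / 2^p" using R M0 by (intro divide_left_mono power_mono mult_pos_pos) auto
    finally show "cmod (\<i>^p * tc G p) \<le> M * (1/2)^p" by (simp add: norm_mult norm_power power_divide)
  qed
  also have "\<dots> \<le> (\<Sum>p. M * (1/2::real)^p)"
    by (rule sum_le_suminf) (use M0 in \<open>auto intro!: summable_mult summable_geometric\<close>)
  also have "\<dots> = 2 * M" by (simp add: suminf_mult suminf_geometric)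
  finally show ?thesis .
qed

lemma tau_lim:
  assumes hol: "G holomorphic_on UNIV" and R: "R \<ge> 2"
    and M: "\<And>s. cmod s \<le> R \<Longrightarrow> cmod (G s) \<le> M"
  shows "cmod (tau N0 G - G \<i>) \<le> 2 * M / 2^N0"
proof -
  have "cmod (G 0) \<le> M" using M[of 0] R by simp
  hence M0: "M \<ge> 0" using norm_ge_zero order_trans by blast
  have s: "(\<lambda>j. tc G j * \<i>^j) sums G \<i>" by (rule tc_sums[OF hol])
  have tb: "cmod (tc G j * \<i>^j) \<le> M * (1/2)^j" for j
  proof -
    have "cmod (tc G j) \<le> M / R^j" using tc_bound[OF hol _ M] R by simp
    also have "\<dots> \<le> M / 2^j" using R M0 by (intro divide_left_mono power_mono mult_pos_pos) auto
    finally show ?thesis by (simp add: norm_mult norm_power power_divide)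
  qed
  have s2: "(\<lambda>j. tc G (j + N0) * \<i>^(j + N0)) sums (G \<i> - (\<Sum>j<N0. tc G j * \<i>^j))"
    using sums_split_initial_segment[OF s, of N0] by simp
  have sg: "summable (\<lambda>j. M * (1/2::real)^(j + N0))" by (intro summable_mult summable_geometric summable_ignore_initial_segment) simp
  have sn: "summable (\<lambda>j. norm (tc G (j + N0) * \<i>^(j + N0)))"
    by (rule summable_comparison_test[OF _ sg]) (use tb in auto)
  have "tau N0 G - G \<i> = - (G \<i> - (\<Sum>j<N0. tc G j * \<i>^j))" by (simp add: tau_def mult_ac)
  hence "cmod (tau N0 G - G \<i>) = norm (\<Sum>j. tc G (j + N0) * \<i>^(j + N0))"
    using s2 by (simp add: sums_iff norm_minus_commute)
  also have "\<dots> \<le> (\<Sum>j. norm (tc G (j + N0) * \<i>^(j + N0)))" by (rule summable_norm[OF sn])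
  also have "\<dots> \<le> (\<Sum>j. M * (1/2::real)^(j + N0))" by (rule suminf_le[OF _ sn sg]) (use tb in auto)
  also have "\<dots> = 2 * M / 2^N0"
  proof -
    have "(\<lambda>j. M * (1/2::real)^(j + N0)) = (\<lambda>j. (M / 2^N0) * (1/2)^j)"
      by (rule ext) (simp add: power_add power_one_over)
    moreover have "(\<Sum>j. (M / 2^N0) * (1/2::real)^j) = (M / 2^N0) * (\<Sum>j. (1/2::real)^j)"
      by (rule suminf_mult) (simp add: summable_geometric)
    ultimately have "(\<Sum>j. M * (1/2::real)^(j + N0)) = (M / 2^N0) * (\<Sum>j. (1/2::real)^j)"
      by simp
    thus ?thesis by (simp add: suminf_geometric)
  qed
  finally show ?thesis .
qed

definition beta :: "nat \<Rightarrow> real \<Rightarrow> nat \<Rightarrow> complex" where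
  "beta N0 h a = (\<Sum>p<N0. if a \<le> p then \<i>^p * complex_of_real ((-1)^(p-a) * real (p choose a)) / complex_of_real (fact p * h^p) else 0)"

lemma ell_comb: "ell N0 h G = (\<Sum>a<N0. beta N0 h a * G (complex_of_real (real a * h)))"
proof -
  have "ell N0 h G = (\<Sum>p<N0. \<Sum>a<N0. if a \<le> p then \<i>^p * complex_of_real ((-1)^(p-a) * real (p choose a)) / complex_of_real (fact p * h^p) * G (complex_of_real (real a * h)) else 0)"
    unfolding ell_def
  proof (rule sum.cong[OF refl])
    fix p assume p: "p \<in> {..<N0}"
    have "(\<Sum>a<N0. if a \<le> p then \<i>^p * complex_of_real ((-1)^(p-a) * real (p choose a)) / complex_of_real (fact p * h^p) * G (complex_of_real (real a * h)) else 0)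
        = (\<Sum>a\<in>{..<N0} \<inter> {a. a \<le> p}. \<i>^p * complex_of_real ((-1)^(p-a) * real (p choose a)) / complex_of_real (fact p * h^p) * G (complex_of_real (real a * h)))"
      by (subst sum.inter_restrict) simp_all
    also have "{..<N0} \<inter> {a. a \<le> p} = {..p}" using p by auto
    also have "(\<Sum>a\<le>p. \<i>^p * complex_of_real ((-1)^(p-a) * real (p choose a)) / complex_of_real (fact p * h^p) * G (complex_of_real (real a * h)))
        = \<i>^p * dlt G p h"
      unfolding dlt_def sum_divide_distrib sum_distrib_left
      by (rule sum.cong[OF refl]) (simp only: divide_inverse mult_ac)
    finally show "\<i>^p * dlt G p h = (\<Sum>a<N0. if a \<le> p then \<i>^p * complex_of_real ((-1)^(p-a) * real (p choose a)) / complex_of_real (fact p * h^p) * G (complex_of_real (real a * h)) else 0)"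
      by simp
  qed
  also have "\<dots> = (\<Sum>a<N0. \<Sum>p<N0. if a \<le> p then \<i>^p * complex_of_real ((-1)^(p-a) * real (p choose a)) / complex_of_real (fact p * h^p) * G (complex_of_real (real a * h)) else 0)"
    by (rule sum.swap)
  also have "\<dots> = (\<Sum>a<N0. beta N0 h a * G (complex_of_real (real a * h)))"
    unfolding beta_def sum_distrib_right by (intro sum.cong refl) (simp add: divide_inverse mult_ac)
  finally show ?thesis .
qed

lemma sq_diff_bound:
  fixes u v :: complex
  shows "\<bar>(cmod u)^2 - (cmod v)^2\<bar> \<le> cmod (u - v) * (cmod u + cmod v)"
proof -
  have "(cmod u)^2 - (cmod v)^2 = (cmod u - cmod v) * (cmod u + cmod v)"
    by (simp add: power2_eq_square algebra_simps)
  hence "\<bar>(cmod u)^2 - (cmod v)^2\<bar> = \<bar>cmod u - cmod v\<bar> * (cmod u + cmod v)"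
    by (simp add: abs_mult)
  also have "\<dots> \<le> cmod (u - v) * (cmod u + cmod v)"
    by (intro mult_right_mono norm_triangle_ineq3) auto
  finally show ?thesis .
qed

lemma exp_series_real: "(\<lambda>N. x^N / fact N) sums exp (x::real)"
  using exp_converges[of x] by (simp add: divide_inverse mult_ac scaleR_conv_of_real)

lemma ser_diff:
  fixes U V :: "('n::finite) list \<Rightarrow> complex"
  assumes UV: "\<And>N \<iota>. \<iota> \<in> LN N \<Longrightarrow> cmod (U \<iota> - V \<iota>) \<le> \<delta> * D * P^N"
    and V: "\<And>N \<iota>. \<iota> \<in> LN N \<Longrightarrow> cmod (V \<iota>) \<le> D * P^N"
    and nn: "\<delta> \<ge> 0" "D \<ge> 0" "P \<ge> 0"
  shows "summable (\<lambda>N. (\<Sum>\<iota>\<in>LN N. (cmod (U \<iota>))^2) / fact N)"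
    and "summable (\<lambda>N. (\<Sum>\<iota>\<in>LN N. (cmod (V \<iota>))^2) / fact N)"
    and "\<bar>(\<Sum>N. (\<Sum>\<iota>\<in>LN N. (cmod (U \<iota>))^2) / fact N) - (\<Sum>N. (\<Sum>\<iota>\<in>LN N. (cmod (V \<iota>))^2) / fact N)\<bar>
           \<le> \<delta> * (\<delta> + 2) * D^2 * exp (real CARD('n) * P^2)"
proof -
  define x where "x = real CARD('n) * P^2"
  have xs: "(\<lambda>N. x^N / fact N) sums exp x" by (rule exp_series_real)
  have U: "cmod (U \<iota>) \<le> (\<delta> + 1) * D * P^N" if "\<iota> \<in> LN N" for N \<iota>
  proof -
    have "cmod (U \<iota>) \<le> cmod (V \<iota>) + cmod (U \<iota> - V \<iota>)" by (rule norm_triangle_sub)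
    also have "\<dots> \<le> D * P^N + \<delta> * D * P^N" by (intro add_mono UV V that)
    finally show ?thesis by (simp add: algebra_simps)
  qed
  have cardx: "real (card (LN N :: 'n list set)) * (P^N)^2 = x^N" for N
    by (simp add: LN_card x_def power_mult_distrib power_mult[symmetric] mult.commute)
  have tb: "(\<Sum>\<iota>\<in>LN N. (cmod (W \<iota>))^2) / fact N \<le> (K * D)^2 * (x^N / fact N)"
    if W: "\<And>\<iota>. \<iota> \<in> LN N \<Longrightarrow> cmod (W \<iota>) \<le> K * D * P^N" and K: "K \<ge> 0" for W :: "'n list \<Rightarrow> complex" and N K
  proof -
    have "(\<Sum>\<iota>\<in>LN N. (cmod (W \<iota>))^2) \<le> (\<Sum>\<iota>\<in>(LN N :: 'n list set). (K * D * P^N)^2)"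
    proof (rule sum_mono)
      fix \<iota> :: "'n list" assume "\<iota> \<in> LN N"
      from W[OF this] show "(cmod (W \<iota>))^2 \<le> (K * D * P^N)^2" by (rule power_mono) simp
    qed
    also have "\<dots> = (K * D)^2 * (real (card (LN N :: 'n list set)) * (P^N)^2)" by (simp add: power_mult_distrib)
    finally show ?thesis unfolding cardx by (simp add: divide_right_mono)
  qed
  have sK: "summable (\<lambda>N. (K * D)^2 * (x^N / fact N))" for K
    by (intro summable_mult sums_summable[OF xs])
  have tU: "(\<Sum>\<iota>\<in>LN N. (cmod (U \<iota>))^2) / fact N \<le> ((\<delta>+1) * D)^2 * (x^N / fact N)" for N
    by (rule tb) (use U nn in auto)
  have tV: "(\<Sum>\<iota>\<in>LN N. (cmod (V \<iota>))^2) / fact N \<le> (1 * D)^2 * (x^N / fact N)" for N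
    by (rule tb) (use V nn in auto)
  show sU: "summable (\<lambda>N. (\<Sum>\<iota>\<in>LN N. (cmod (U \<iota>))^2) / fact N)"
    by (rule summable_comparison_test'[OF sK[of "\<delta>+1"], where N=0]) (use tU in \<open>auto simp: abs_of_nonneg sum_nonneg\<close>)
  show sV: "summable (\<lambda>N. (\<Sum>\<iota>\<in>LN N. (cmod (V \<iota>))^2) / fact N)"
    by (rule summable_comparison_test'[OF sK[of 1], where N=0]) (use tV in \<open>auto simp: abs_of_nonneg sum_nonneg\<close>)
  have db: "\<bar>(\<Sum>\<iota>\<in>LN N. (cmod (U \<iota>))^2) / fact N - (\<Sum>\<iota>\<in>LN N. (cmod (V \<iota>))^2) / fact N\<bar>
      \<le> \<delta> * (\<delta> + 2) * D^2 * (x^N / fact N)" for N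
  proof -
    have "\<bar>(\<Sum>\<iota>\<in>LN N. (cmod (U \<iota>))^2) - (\<Sum>\<iota>\<in>LN N. (cmod (V \<iota>))^2)\<bar> \<le> (\<Sum>\<iota>\<in>LN N. \<bar>(cmod (U \<iota>))^2 - (cmod (V \<iota>))^2\<bar>)"
      by (simp add: sum_subtractf[symmetric] sum_abs)
    also have "\<dots> \<le> (\<Sum>\<iota>\<in>(LN N :: 'n list set). (\<delta> * D * P^N) * ((\<delta> + 1) * D * P^N + D * P^N))"
    proof (rule sum_mono)
      fix \<iota> :: "'n list" assume i: "\<iota> \<in> LN N"
      have "\<bar>(cmod (U \<iota>))^2 - (cmod (V \<iota>))^2\<bar> \<le> cmod (U \<iota> - V \<iota>) * (cmod (U \<iota>) + cmod (V \<iota>))" by (rule sq_diff_bound)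
      also have "\<dots> \<le> (\<delta> * D * P^N) * ((\<delta> + 1) * D * P^N + D * P^N)"
        using nn by (intro mult_mono add_mono UV V U i) auto
      finally show "\<bar>(cmod (U \<iota>))^2 - (cmod (V \<iota>))^2\<bar> \<le> (\<delta> * D * P^N) * ((\<delta> + 1) * D * P^N + D * P^N)" .
    qed
    also have "\<dots> = \<delta> * (\<delta> + 2) * D^2 * (real (card (LN N :: 'n list set)) * (P^N)^2)"
      by (simp add: power2_eq_square algebra_simps)
    also have "\<dots> = \<delta> * (\<delta> + 2) * D^2 * x^N" by (simp add: cardx)
    finally have "\<bar>(\<Sum>\<iota>\<in>LN N. (cmod (U \<iota>))^2) - (\<Sum>\<iota>\<in>LN N. (cmod (V \<iota>))^2)\<bar> \<le> \<delta> * (\<delta> + 2) * D^2 * x^N" .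
    hence "\<bar>(\<Sum>\<iota>\<in>LN N. (cmod (U \<iota>))^2) - (\<Sum>\<iota>\<in>LN N. (cmod (V \<iota>))^2)\<bar> / fact N \<le> \<delta> * (\<delta> + 2) * D^2 * x^N / fact N"
      by (rule divide_right_mono) simp
    thus ?thesis by (simp add: diff_divide_distrib[symmetric])
  qed
  have sd: "summable (\<lambda>N. \<delta> * (\<delta> + 2) * D^2 * (x^N / fact N))"
    by (intro summable_mult sums_summable[OF xs])
  have "\<bar>(\<Sum>N. (\<Sum>\<iota>\<in>LN N. (cmod (U \<iota>))^2) / fact N) - (\<Sum>N. (\<Sum>\<iota>\<in>LN N. (cmod (V \<iota>))^2) / fact N)\<bar>
      = \<bar>\<Sum>N. (\<Sum>\<iota>\<in>LN N. (cmod (U \<iota>))^2) / fact N - (\<Sum>\<iota>\<in>LN N. (cmod (V \<iota>))^2) / fact N\<bar>"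
    using suminf_diff[OF sU sV] by simp
  also have "\<dots> \<le> (\<Sum>N. \<bar>(\<Sum>\<iota>\<in>LN N. (cmod (U \<iota>))^2) / fact N - (\<Sum>\<iota>\<in>LN N. (cmod (V \<iota>))^2) / fact N\<bar>)"
    (is "\<bar>suminf ?d\<bar> \<le> _")
  proof -
    have sA: "summable (\<lambda>N. norm (?d N))"
      by (rule summable_comparison_test'[OF sd, where N=0]) (use db in \<open>auto simp: real_norm_def\<close>)
    from summable_norm[OF sA] show ?thesis by (simp add: real_norm_def)
  qed
  also have "\<dots> \<le> (\<Sum>N. \<delta> * (\<delta> + 2) * D^2 * (x^N / fact N))"
  proof (rule suminf_le[OF db _ sd])
    show "summable (\<lambda>N. \<bar>(\<Sum>\<iota>\<in>LN N. (cmod (U \<iota>))^2) / fact N - (\<Sum>\<iota>\<in>LN N. (cmod (V \<iota>))^2) / fact N\<bar>)"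
      by (rule summable_comparison_test'[OF sd, where N=0]) (use db in auto)
  qed
  also have "\<dots> = \<delta> * (\<delta> + 2) * D^2 * exp x"
    using suminf_mult[OF sums_summable[OF xs], of "\<delta> * (\<delta> + 2) * D^2"] xs by (simp add: sums_iff)
  finally show "\<bar>(\<Sum>N. (\<Sum>\<iota>\<in>LN N. (cmod (U \<iota>))^2) / fact N) - (\<Sum>N. (\<Sum>\<iota>\<in>LN N. (cmod (V \<iota>))^2) / fact N)\<bar>
           \<le> \<delta> * (\<delta> + 2) * D^2 * exp (real CARD('n) * P^2)" unfolding x_def .
qed

lemma line_hol:
  fixes \<Phi> :: "complex^'n \<Rightarrow> complex^'n"
  assumes "entire_vec \<Phi>"
  shows "(\<lambda>s. \<Phi> (c + s *s v) $ j) holomorphic_on UNIV"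
proof -
  have "(\<lambda>s. \<Phi> (c + s *s v) $ j) field_differentiable (at s0)" for s0
  proof -
    obtain D where D: "(\<Phi> has_derivative D) (at (c + s0 *s v))" and lin: "\<And>(a::complex) w. D (a *s w) = a *s D w"
      using assms unfolding entire_vec_def by blast
    have l: "((\<lambda>s. c + s *s v) has_derivative (\<lambda>h. h *s v)) (at s0)"
    proof -
      have "bounded_linear (\<lambda>h::complex. h *s v)"
        by (rule bounded_linearI'[of _ ]) (auto simp: vec_eq_iff vector_scalar_mult_def algebra_simps)
      hence "((\<lambda>h::complex. h *s v) has_derivative (\<lambda>h. h *s v)) (at s0)" by (rule bounded_linear_imp_has_derivative)
      thus ?thesis by (intro derivative_eq_intros) auto
    qed
    have "((\<lambda>s. \<Phi> (c + s *s v)) has_derivative (\<lambda>h. D (h *s v))) (at s0)"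
      using has_derivative_compose[OF l D] by (simp add: o_def)
    hence "((\<lambda>s. \<Phi> (c + s *s v) $ j) has_derivative (\<lambda>h. D (h *s v) $ j)) (at s0)"
      by (rule has_derivative_compose[OF _ bounded_linear_imp_has_derivative[OF bounded_linear_vec_nth], unfolded o_def])
    moreover have "(\<lambda>h. D (h *s v) $ j) = (\<lambda>h. h * (D v $ j))"
      by (rule ext, subst lin, simp add: vector_scalar_mult_def)
    ultimately have "((\<lambda>s. \<Phi> (c + s *s v) $ j) has_derivative (\<lambda>h. h * (D v $ j))) (at s0)"
      by simp
    moreover have "(\<lambda>h. h * (D v $ j)) = (*) (D v $ j)" by (rule ext) (simp add: mult.commute)
    ultimately show ?thesis unfolding field_differentiable_def has_field_derivative_def by auto
  qed
  thus ?thesis by (simp add: holomorphic_on_def field_differentiable_at_within)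
qed

lemma prod_list_hol:
  assumes "\<And>j. (\<lambda>s. f s j) holomorphic_on UNIV"
  shows "(\<lambda>s. prod_list (map (f s) \<iota>)) holomorphic_on UNIV"
  by (induction \<iota>) (auto intro!: holomorphic_intros assms)

lemma feat_hol:
  fixes V :: "complex \<Rightarrow> complex^'n"
  assumes "\<And>j. (\<lambda>s. V s $ j) holomorphic_on UNIV"
  shows "(\<lambda>s. feat \<iota> (V s)) holomorphic_on UNIV"
  unfolding feat_def
  by (intro holomorphic_intros holomorphic_on_compose[OF _ holomorphic_on_exp, unfolded o_def] prod_list_hol[where f="\<lambda>s j. V s $ j"] assms)

lemma prod_list_bound:
  assumes "\<And>j. cmod (f j) \<le> P"
  shows "cmod (prod_list (map f \<iota>)) \<le> P ^ length \<iota>"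
proof (induction \<iota>)
  case Nil thus ?case by simp
next
  case (Cons a \<iota>)
  have P0: "P \<ge> 0" using assms[of a] norm_ge_zero order_trans by blast
  have "cmod (prod_list (map f (a # \<iota>))) = cmod (f a) * cmod (prod_list (map f \<iota>))" by (simp add: norm_mult)
  also have "\<dots> \<le> P * P ^ length \<iota>" by (intro mult_mono assms Cons P0) auto
  finally show ?case by simp
qed

lemma feat_bound:
  fixes v :: "complex^'n"
  assumes "\<And>j. cmod (v $ j) \<le> P" "\<iota> \<in> LN N"
  shows "cmod (feat \<iota> v) \<le> exp (real CARD('n) * P^2 / 2) * P^N"
proof -
  have P0: "P \<ge> 0" using assms(1) norm_ge_zero order_trans by blast
  have "cmod (-(1/2) * (\<Sum>j\<in>UNIV. (v$j)^2)) \<le> (1/2) * (\<Sum>j\<in>UNIV. (cmod (v$j))^2)"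
  proof -
    have "cmod (-(1/2) * (\<Sum>j\<in>UNIV. (v$j)^2)) = (1/2) * cmod (\<Sum>j\<in>UNIV. (v$j)^2)" by (simp add: norm_mult)
    also have "cmod (\<Sum>j\<in>UNIV. (v$j)^2) \<le> (\<Sum>j\<in>UNIV. (cmod (v$j))^2)"
      by (rule order_trans[OF norm_sum]) (simp add: norm_power)
    finally show ?thesis by simp
  qed
  also have "\<dots> \<le> (1/2) * (\<Sum>j\<in>(UNIV::'n set). P^2)"
    by (intro mult_left_mono sum_mono power_mono assms(1)) auto
  also have "\<dots> = real CARD('n) * P^2 / 2" by simp
  finally have e: "cmod (-(1/2) * (\<Sum>j\<in>UNIV. (v$j)^2)) \<le> real CARD('n) * P^2 / 2" .
  have "cmod (exp (-(1/2) * (\<Sum>j\<in>UNIV. (v$j)^2))) \<le> exp (real CARD('n) * P^2 / 2)"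
    by (rule order_trans[OF norm_exp]) (use e in simp)
  moreover have "cmod (prod_list (map (\<lambda>j. v$j) \<iota>)) \<le> P^N"
    using prod_list_bound[of "\<lambda>j. v$j" P \<iota>] assms(1,2) by (simp add: LN_def)
  ultimately show ?thesis unfolding feat_def norm_mult by (intro mult_mono) auto
qed

lemma line_bound:
  fixes \<Phi> :: "complex^'n \<Rightarrow> complex^'n" and m :: nat
  assumes "entire_vec \<Phi>"
  shows "\<exists>P\<ge>0. \<forall>k<m. \<forall>s. cmod s \<le> R \<longrightarrow> (\<forall>j. cmod (\<Phi> (c k + s *s v k) $ j) \<le> P)"
proof -
  have "\<exists>B. \<forall>s\<in>cball 0 R. cmod (\<Phi> (c k + s *s v k) $ j) \<le> B" for k j
  proof -
    have "continuous_on (cball 0 R) (\<lambda>s. \<Phi> (c k + s *s v k) $ j)"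
      by (rule holomorphic_on_imp_continuous_on, rule holomorphic_on_subset[OF line_hol[OF assms]]) auto
    hence "compact ((\<lambda>s. \<Phi> (c k + s *s v k) $ j) ` cball 0 R)" by (intro compact_continuous_image) auto
    hence "bounded ((\<lambda>s. \<Phi> (c k + s *s v k) $ j) ` cball 0 R)" by (rule compact_imp_bounded)
    thus ?thesis unfolding bounded_iff by auto
  qed
  then obtain B where B: "\<And>k j s. s \<in> cball 0 R \<Longrightarrow> cmod (\<Phi> (c k + s *s v k) $ j) \<le> B k j" by metis
  define P where "P = (\<Sum>k<m. \<Sum>j\<in>UNIV. max 0 (B k j))"
  have "P \<ge> 0" unfolding P_def by (intro sum_nonneg) auto
  moreover have "cmod (\<Phi> (c k + s *s v k) $ j) \<le> P" if "k < m" "cmod s \<le> R" for k s j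
  proof -
    have "cmod (\<Phi> (c k + s *s v k) $ j) \<le> max 0 (B k j)" using B[of s k j] that by simp
    also have "\<dots> \<le> (\<Sum>j\<in>UNIV. max 0 (B k j))" by (rule member_le_sum) auto
    also have "\<dots> \<le> P" unfolding P_def using that by (intro member_le_sum[where f="\<lambda>k. \<Sum>j\<in>UNIV. max 0 (B k j)"]) (auto intro: sum_nonneg)
    finally show ?thesis .
  qed
  ultimately show ?thesis by blast
qed

definition SS :: "(('n::finite) list \<Rightarrow> complex) \<Rightarrow> real" where
  "SS u = (\<Sum>N. (\<Sum>\<iota>\<in>LN N. (cmod (u \<iota>))^2) / fact N)"

lemma Gf_hol:
  fixes \<Phi> :: "complex^'n \<Rightarrow> complex^'n"
  assumes "entire_vec \<Phi>"
  shows "(\<lambda>s. feat \<iota> (\<Phi> (c + s *s v))) holomorphic_on UNIV"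
  by (rule feat_hol[where V="\<lambda>s. \<Phi> (c + s *s v)"], rule line_hol[OF assms])

lemma step_h:
  fixes \<Phi> :: "complex^'n \<Rightarrow> complex^'n" and m :: nat
  assumes ent: "entire_vec \<Phi>"
  shows "\<exists>K. \<forall>h. 0 < h \<longrightarrow> h \<le> 1 \<longrightarrow>
     \<bar>SS (\<lambda>\<iota>. \<Sum>k<m. a k * ell QQ h (\<lambda>s. feat \<iota> (\<Phi> (c k + s *s v k))))
      - SS (\<lambda>\<iota>. \<Sum>k<m. a k * tau QQ (\<lambda>s. feat \<iota> (\<Phi> (c k + s *s v k))))\<bar> \<le> h * K"
proof -
  define R :: real where "R = 2 * real QQ + 2"
  obtain P where P0: "P \<ge> 0" and P: "\<And>k s j. k < m \<Longrightarrow> cmod s \<le> R \<Longrightarrow> cmod (\<Phi> (c k + s *s v k) $ j) \<le> P"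
    using line_bound[OF ent, of m R c v] by blast
  define A where "A = exp (real CARD('n) * P^2 / 2)"
  define \<alpha> where "\<alpha> = (\<Sum>k<m. cmod (a k))"
  define D where "D = 2 * \<alpha> * A * 2^(QQ+1)"
  have A0: "A > 0" unfolding A_def by simp
  have \<alpha>0: "\<alpha> \<ge> 0" unfolding \<alpha>_def by (intro sum_nonneg) auto
  have D0: "D \<ge> 0" unfolding D_def using A0 \<alpha>0 by simp
  have Mb: "\<And>s. cmod s \<le> R \<Longrightarrow> cmod (feat \<iota> (\<Phi> (c k + s *s v k))) \<le> A * P^N"
    if "\<iota> \<in> LN N" "k < m" for \<iota> N k
    unfolding A_def using feat_bound[OF P[OF that(2)] that(1)] by blast
  have R0: "R > 0" "2 * real QQ \<le> R" "R \<ge> 2" unfolding R_def by auto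
  have K: "\<bar>SS (\<lambda>\<iota>. \<Sum>k<m. a k * ell QQ h (\<lambda>s. feat \<iota> (\<Phi> (c k + s *s v k))))
      - SS (\<lambda>\<iota>. \<Sum>k<m. a k * tau QQ (\<lambda>s. feat \<iota> (\<Phi> (c k + s *s v k))))\<bar> \<le> h * (3 * D^2 * exp (real CARD('n) * P^2))"
    if h: "0 < h" "h \<le> 1" for h
  proof -
    have UV: "cmod ((\<Sum>k<m. a k * ell QQ h (\<lambda>s. feat \<iota> (\<Phi> (c k + s *s v k)))) - (\<Sum>k<m. a k * tau QQ (\<lambda>s. feat \<iota> (\<Phi> (c k + s *s v k)))))
        \<le> h * D * P^N" if i: "\<iota> \<in> LN N" for N \<iota>
    proof -
      have "cmod ((\<Sum>k<m. a k * ell QQ h (\<lambda>s. feat \<iota> (\<Phi> (c k + s *s v k)))) - (\<Sum>k<m. a k * tau QQ (\<lambda>s. feat \<iota> (\<Phi> (c k + s *s v k)))))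
          = cmod (\<Sum>k<m. a k * (ell QQ h (\<lambda>s. feat \<iota> (\<Phi> (c k + s *s v k))) - tau QQ (\<lambda>s. feat \<iota> (\<Phi> (c k + s *s v k)))))"
        by (simp add: sum_subtractf algebra_simps)
      also have "\<dots> \<le> (\<Sum>k<m. cmod (a k) * (h * (A * P^N) * 2^(QQ+1)))"
      proof (rule order_trans[OF norm_sum], rule sum_mono)
        fix k assume "k \<in> {..<m}"
        hence "cmod (ell QQ h (\<lambda>s. feat \<iota> (\<Phi> (c k + s *s v k))) - tau QQ (\<lambda>s. feat \<iota> (\<Phi> (c k + s *s v k)))) \<le> h * (A * P^N) * 2^(QQ+1)"
          by (intro ell_tau[OF Gf_hol[OF ent] h R0(1,2)] Mb[OF i]) auto
        thus "cmod (a k * (ell QQ h (\<lambda>s. feat \<iota> (\<Phi> (c k + s *s v k))) - tau QQ (\<lambda>s. feat \<iota> (\<Phi> (c k + s *s v k))))) \<le> cmod (a k) * (h * (A * P^N) * 2^(QQ+1))"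
          by (simp add: norm_mult mult_left_mono)
      qed
      also have "\<dots> = h * (\<alpha> * A * 2^(QQ+1)) * P^N"
        unfolding \<alpha>_def sum_distrib_right[symmetric] by (simp add: mult_ac)
      also have "\<dots> \<le> h * D * P^N" unfolding D_def using h A0 \<alpha>0 P0 by (intro mult_right_mono mult_left_mono) auto
      finally show ?thesis .
    qed
    have V: "cmod (\<Sum>k<m. a k * tau QQ (\<lambda>s. feat \<iota> (\<Phi> (c k + s *s v k)))) \<le> D * P^N" if i: "\<iota> \<in> LN N" for N \<iota>
    proof -
      have "cmod (\<Sum>k<m. a k * tau QQ (\<lambda>s. feat \<iota> (\<Phi> (c k + s *s v k)))) \<le> (\<Sum>k<m. cmod (a k) * (2 * (A * P^N)))"
      proof (rule order_trans[OF norm_sum], rule sum_mono)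
        fix k assume "k \<in> {..<m}"
        hence "cmod (tau QQ (\<lambda>s. feat \<iota> (\<Phi> (c k + s *s v k)))) \<le> 2 * (A * P^N)"
          by (intro tau_bound[OF Gf_hol[OF ent] R0(3)] Mb[OF i]) auto
        thus "cmod (a k * tau QQ (\<lambda>s. feat \<iota> (\<Phi> (c k + s *s v k)))) \<le> cmod (a k) * (2 * (A * P^N))"
          by (simp add: norm_mult mult_left_mono)
      qed
      also have "\<dots> = (2 * \<alpha> * A) * P^N"
        unfolding \<alpha>_def sum_distrib_right[symmetric] by (simp add: mult_ac)
      also have "\<dots> \<le> D * P^N"
      proof (rule mult_right_mono)
        have "2 * \<alpha> * A * 1 \<le> 2 * \<alpha> * A * 2^(QQ+1)"
          using A0 \<alpha>0 by (intro mult_left_mono one_le_power) auto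
        thus "2 * \<alpha> * A \<le> D" unfolding D_def by simp
      qed (use P0 in simp)
      finally show ?thesis .
    qed
    have "\<bar>SS (\<lambda>\<iota>. \<Sum>k<m. a k * ell QQ h (\<lambda>s. feat \<iota> (\<Phi> (c k + s *s v k))))
      - SS (\<lambda>\<iota>. \<Sum>k<m. a k * tau QQ (\<lambda>s. feat \<iota> (\<Phi> (c k + s *s v k))))\<bar> \<le> h * (h + 2) * D^2 * exp (real CARD('n) * P^2)"
      unfolding SS_def by (rule ser_diff(3)[OF UV V]) (use h D0 P0 in auto)
    also have "\<dots> \<le> h * 3 * D^2 * exp (real CARD('n) * P^2)"
      using h by (intro mult_right_mono mult_left_mono) auto
    finally show ?thesis by (simp add: mult_ac)
  qed
  thus ?thesis by blast
qed

lemma step_N: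
  fixes \<Phi> :: "complex^'n \<Rightarrow> complex^'n" and m :: nat
  assumes ent: "entire_vec \<Phi>"
  shows "\<exists>K. \<forall>N0.
     \<bar>SS (\<lambda>\<iota>. \<Sum>k<m. a k * tau N0 (\<lambda>s. feat \<iota> (\<Phi> (c k + s *s v k))))
      - SS (\<lambda>\<iota>. \<Sum>k<m. a k * feat \<iota> (\<Phi> (c k + \<i> *s v k)))\<bar> \<le> K / 2^N0"
proof -
  define R :: real where "R = 2"
  obtain P where P0: "P \<ge> 0" and P: "\<And>k s j. k < m \<Longrightarrow> cmod s \<le> R \<Longrightarrow> cmod (\<Phi> (c k + s *s v k) $ j) \<le> P"
    using line_bound[OF ent, of m R c v] by blast
  define A where "A = exp (real CARD('n) * P^2 / 2)"
  define \<alpha> where "\<alpha> = (\<Sum>k<m. cmod (a k))"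
  define D where "D = 2 * \<alpha> * A"
  have A0: "A > 0" unfolding A_def by simp
  have \<alpha>0: "\<alpha> \<ge> 0" unfolding \<alpha>_def by (intro sum_nonneg) auto
  have D0: "D \<ge> 0" unfolding D_def using A0 \<alpha>0 by simp
  have Mb: "\<And>s. cmod s \<le> R \<Longrightarrow> cmod (feat \<iota> (\<Phi> (c k + s *s v k))) \<le> A * P^N"
    if "\<iota> \<in> LN N" "k < m" for \<iota> N k
    unfolding A_def using feat_bound[OF P[OF that(2)] that(1)] by blast
  have R0: "R \<ge> 2" unfolding R_def by auto
  have K: "\<bar>SS (\<lambda>\<iota>. \<Sum>k<m. a k * tau N0 (\<lambda>s. feat \<iota> (\<Phi> (c k + s *s v k))))
      - SS (\<lambda>\<iota>. \<Sum>k<m. a k * feat \<iota> (\<Phi> (c k + \<i> *s v k)))\<bar> \<le> (3 * D^2 * exp (real CARD('n) * P^2)) / 2^N0" for N0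
  proof -
    define \<delta> :: real where "\<delta> = 1 / 2^N0"
    have \<delta>0: "\<delta> > 0" "\<delta> \<le> 1" unfolding \<delta>_def by auto
    have UV: "cmod ((\<Sum>k<m. a k * tau N0 (\<lambda>s. feat \<iota> (\<Phi> (c k + s *s v k)))) - (\<Sum>k<m. a k * feat \<iota> (\<Phi> (c k + \<i> *s v k))))
        \<le> \<delta> * D * P^N" if i: "\<iota> \<in> LN N" for N \<iota>
    proof -
      have "cmod ((\<Sum>k<m. a k * tau N0 (\<lambda>s. feat \<iota> (\<Phi> (c k + s *s v k)))) - (\<Sum>k<m. a k * feat \<iota> (\<Phi> (c k + \<i> *s v k))))
          = cmod (\<Sum>k<m. a k * (tau N0 (\<lambda>s. feat \<iota> (\<Phi> (c k + s *s v k))) - (\<lambda>s. feat \<iota> (\<Phi> (c k + s *s v k))) \<i>))"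
        by (simp add: sum_subtractf algebra_simps)
      also have "\<dots> \<le> (\<Sum>k<m. cmod (a k) * (2 * (A * P^N) / 2^N0))"
      proof (rule order_trans[OF norm_sum], rule sum_mono)
        fix k assume "k \<in> {..<m}"
        hence "cmod (tau N0 (\<lambda>s. feat \<iota> (\<Phi> (c k + s *s v k))) - (\<lambda>s. feat \<iota> (\<Phi> (c k + s *s v k))) \<i>) \<le> 2 * (A * P^N) / 2^N0"
          by (intro tau_lim[OF Gf_hol[OF ent] R0] Mb[OF i]) auto
        thus "cmod (a k * (tau N0 (\<lambda>s. feat \<iota> (\<Phi> (c k + s *s v k))) - (\<lambda>s. feat \<iota> (\<Phi> (c k + s *s v k))) \<i>)) \<le> cmod (a k) * (2 * (A * P^N) / 2^N0)"
          unfolding norm_mult by (rule mult_left_mono) simp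
      qed
      also have "\<dots> = \<delta> * D * P^N"
        unfolding \<alpha>_def D_def \<delta>_def sum_distrib_right[symmetric] by (simp add: mult_ac)
      finally show ?thesis .
    qed
    have V: "cmod (\<Sum>k<m. a k * feat \<iota> (\<Phi> (c k + \<i> *s v k))) \<le> D * P^N" if i: "\<iota> \<in> LN N" for N \<iota>
    proof -
      have "cmod (\<Sum>k<m. a k * feat \<iota> (\<Phi> (c k + \<i> *s v k))) \<le> (\<Sum>k<m. cmod (a k) * (A * P^N))"
      proof (rule order_trans[OF norm_sum], rule sum_mono)
        fix k assume "k \<in> {..<m}"
        hence "cmod (feat \<iota> (\<Phi> (c k + \<i> *s v k))) \<le> A * P^N"
          using R0 by (intro Mb[OF i]) auto
        thus "cmod (a k * feat \<iota> (\<Phi> (c k + \<i> *s v k))) \<le> cmod (a k) * (A * P^N)"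
          by (simp add: norm_mult mult_left_mono)
      qed
      also have "\<dots> = (\<alpha> * A) * P^N"
        unfolding \<alpha>_def sum_distrib_right[symmetric] by (simp add: mult_ac)
      also have "\<dots> \<le> D * P^N" unfolding D_def using A0 \<alpha>0 P0 by (intro mult_right_mono) auto
      finally show ?thesis .
    qed
    have "\<bar>SS (\<lambda>\<iota>. \<Sum>k<m. a k * tau N0 (\<lambda>s. feat \<iota> (\<Phi> (c k + s *s v k))))
      - SS (\<lambda>\<iota>. \<Sum>k<m. a k * feat \<iota> (\<Phi> (c k + \<i> *s v k)))\<bar> \<le> \<delta> * (\<delta> + 2) * D^2 * exp (real CARD('n) * P^2)"
      unfolding SS_def by (rule ser_diff(3)[OF UV V]) (use \<delta>0 D0 P0 in auto)
    also have "\<dots> \<le> \<delta> * 3 * D^2 * exp (real CARD('n) * P^2)"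
      using \<delta>0 by (intro mult_right_mono mult_left_mono) auto
    finally show ?thesis by (simp add: \<delta>_def mult_ac)
  qed
  thus ?thesis by blast
qed

lemma sum_flatten:
  fixes f :: "nat \<Rightarrow> nat \<Rightarrow> 'a::comm_monoid_add"
  shows "(\<Sum>i<q*m. f (i div m) (i mod m)) = (\<Sum>a<q. \<Sum>k<m. f a k)"
proof (cases "m = 0")
  case True thus ?thesis by simp
next
  case False
  show ?thesis
  proof (induction q)
    case 0 thus ?case by simp
  next
    case (Suc q)
    have "{..<Suc q * m} = {..<q*m} \<union> {q*m..<q*m+m}" by auto
    hence "(\<Sum>i<Suc q * m. f (i div m) (i mod m)) = (\<Sum>i<q*m. f (i div m) (i mod m)) + (\<Sum>i\<in>{q*m..<q*m+m}. f (i div m) (i mod m))"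
      by (simp add: sum.union_disjoint ivl_disj_int(2))
    also have "(\<Sum>i\<in>{q*m..<q*m+m}. f (i div m) (i mod m)) = (\<Sum>k\<in>{0..<m}. f ((k + q*m) div m) ((k + q*m) mod m))"
      using sum.shift_bounds_nat_ivl[of "\<lambda>i. f (i div m) (i mod m)" 0 "q*m" m] by (simp add: add.commute)
    also have "\<dots> = (\<Sum>k<m. f q k)"
      using False by (intro sum.cong) auto
    finally show ?case using Suc by simp
  qed
qed

lemma SS_Qc: "SS (\<lambda>\<iota>. \<Sum>i<M. c i * feat \<iota> (Z i)) = Qc c Z M"
  using QF[of c Z M] unfolding SS_def Tt_def by (simp add: sums_iff)

lemma eps_h:
  fixes x y K :: real
  assumes "\<And>h. 0 < h \<Longrightarrow> h \<le> 1 \<Longrightarrow> x \<le> y + h * K"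
  shows "x \<le> y"
proof (rule field_le_epsilon)
  fix e :: real assume e: "0 < e"
  define h where "h = min 1 (e / (\<bar>K\<bar> + 1))"
  have h: "0 < h" "h \<le> 1" using e by (auto simp: h_def)
  have "h * K \<le> h * \<bar>K\<bar>" using h by (intro mult_left_mono) auto
  also have "\<dots> \<le> e / (\<bar>K\<bar> + 1) * \<bar>K\<bar>" by (intro mult_right_mono) (auto simp: h_def)
  also have "\<dots> \<le> e" using e by (simp add: field_simps)
  finally show "x \<le> y + e" using assms[OF h] by simp
qed

lemma eps_N:
  fixes x y K :: real
  assumes "\<And>N. x \<le> y + K / 2^N"
  shows "x \<le> y"
proof (rule field_le_epsilon)
  fix e :: real assume e: "0 < e"
  obtain N where N: "\<bar>K\<bar> / e < 2^N" using real_arch_pow[of 2 "\<bar>K\<bar> / e"] by auto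
  have "K / 2^N \<le> \<bar>K\<bar> / 2^N" by (simp add: divide_right_mono)
  also have "\<dots> \<le> e" using N e by (simp add: field_simps)
  finally show "x \<le> y + e" using assms[of N] by simp
qed

lemma entire_id: "entire_vec (\<lambda>z::complex^'n. z)"
  unfolding entire_vec_def by (auto intro!: exI[of _ "\<lambda>x. x"] has_derivative_ident)

lemma complex_dom:
  fixes F :: "real^'n \<Rightarrow> real^'n" and Fc :: "complex^'n \<Rightarrow> complex^'n"
    and a :: "nat \<Rightarrow> complex" and z :: "nat \<Rightarrow> complex^'n" and m :: nat
  assumes ent: "entire_vec Fc" and ext: "\<And>x. Fc (cvec x) = cvec (F x)"
    and rd: "\<And>M (c::nat\<Rightarrow>complex) pts. Qc c (\<lambda>i. cvec (F (pts i))) M \<le> B^2 * Qc c (\<lambda>i. cvec (pts i)) M"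
  shows "Qc a (\<lambda>k. Fc (z k)) m \<le> B^2 * Qc a z m"
proof -
  define xr where "xr = (\<lambda>k. (\<chi> j. Re (z k $ j)) :: real^'n)"
  define yr where "yr = (\<lambda>k. (\<chi> j. Im (z k $ j)) :: real^'n)"
  define cc where "cc = (\<lambda>k. cvec (xr k))"
  define vv where "vv = (\<lambda>k. cvec (yr k))"
  have line_real: "cc k + complex_of_real r *s vv k = cvec (xr k + r *\<^sub>R yr k)" for k r
    by (simp add: vec_eq_iff cc_def vv_def cvec_def vector_scalar_mult_def)
  have line_i: "cc k + \<i> *s vv k = z k" for k
    by (simp add: vec_eq_iff cc_def vv_def cvec_def vector_scalar_mult_def xr_def yr_def complex_eq_iff)
  define X where "X = (\<lambda>\<Phi> N0 h. SS (\<lambda>\<iota>. \<Sum>k<m. a k * ell N0 h (\<lambda>s. feat \<iota> ((\<Phi>::complex^'n \<Rightarrow> complex^'n) (cc k + s *s vv k)))))"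
  define V where "V = (\<lambda>\<Phi> N0. SS (\<lambda>\<iota>. \<Sum>k<m. a k * tau N0 (\<lambda>s. feat \<iota> ((\<Phi>::complex^'n \<Rightarrow> complex^'n) (cc k + s *s vv k)))))"
  define W where "W = (\<lambda>\<Phi>. SS (\<lambda>\<iota>. \<Sum>k<m. a k * feat \<iota> ((\<Phi>::complex^'n \<Rightarrow> complex^'n) (cc k + \<i> *s vv k))))"
  have Xflat: "X \<Phi> N0 h = Qc (\<lambda>i. beta N0 h (i div m) * a (i mod m))
      (\<lambda>i. \<Phi> (cvec (xr (i mod m) + (real (i div m) * h) *\<^sub>R yr (i mod m)))) (N0 * m)" for \<Phi> N0 h
  proof -
    have "(\<Sum>k<m. a k * ell N0 h (\<lambda>s. feat \<iota> (\<Phi> (cc k + s *s vv k))))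
        = (\<Sum>i<N0 * m. beta N0 h (i div m) * a (i mod m) * feat \<iota> (\<Phi> (cvec (xr (i mod m) + (real (i div m) * h) *\<^sub>R yr (i mod m)))))" for \<iota>
    proof -
      have "(\<Sum>k<m. a k * ell N0 h (\<lambda>s. feat \<iota> (\<Phi> (cc k + s *s vv k))))
          = (\<Sum>k<m. \<Sum>b<N0. beta N0 h b * a k * feat \<iota> (\<Phi> (cvec (xr k + (real b * h) *\<^sub>R yr k))))"
        unfolding ell_comb line_real by (simp add: sum_distrib_left mult_ac)
      also have "\<dots> = (\<Sum>b<N0. \<Sum>k<m. beta N0 h b * a k * feat \<iota> (\<Phi> (cvec (xr k + (real b * h) *\<^sub>R yr k))))"
        by (rule sum.swap)
      also have "\<dots> = (\<Sum>i<N0 * m. beta N0 h (i div m) * a (i mod m) * feat \<iota> (\<Phi> (cvec (xr (i mod m) + (real (i div m) * h) *\<^sub>R yr (i mod m)))))"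
        by (rule sum_flatten[where f="\<lambda>b k. beta N0 h b * a k * feat \<iota> (\<Phi> (cvec (xr k + (real b * h) *\<^sub>R yr k)))", symmetric])
      finally show ?thesis .
    qed
    thus ?thesis unfolding X_def by (simp add: SS_Qc)
  qed
  have XX: "X Fc N0 h \<le> B^2 * X (\<lambda>z. z) N0 h" for N0 h
    unfolding Xflat ext by (rule rd)
  obtain K3 where K3: "\<And>N0. \<bar>V Fc N0 - W Fc\<bar> \<le> K3 / 2^N0"
    using step_N[OF ent, where m=m and a=a and c=cc and v=vv] unfolding V_def W_def by blast
  obtain K4 where K4: "\<And>N0. \<bar>V (\<lambda>z. z) N0 - W (\<lambda>z. z)\<bar> \<le> K4 / 2^N0"
    using step_N[OF entire_id, where m=m and a=a and c=cc and v=vv] unfolding V_def W_def by blast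
  have VV: "V Fc N0 \<le> B^2 * V (\<lambda>z. z) N0" for N0
  proof -
    obtain K1 where K1: "\<And>h. 0 < h \<Longrightarrow> h \<le> 1 \<Longrightarrow> \<bar>X Fc N0 h - V Fc N0\<bar> \<le> h * K1"
      using step_h[OF ent, where m=m and a=a and QQ=N0 and c=cc and v=vv] unfolding X_def V_def by blast
    obtain K2 where K2: "\<And>h. 0 < h \<Longrightarrow> h \<le> 1 \<Longrightarrow> \<bar>X (\<lambda>z. z) N0 h - V (\<lambda>z. z) N0\<bar> \<le> h * K2"
      using step_h[OF entire_id, where m=m and a=a and QQ=N0 and c=cc and v=vv] unfolding X_def V_def by blast
    show ?thesis
    proof (rule eps_h[where K="K1 + B^2 * K2"])
      fix h :: real assume h: "0 < h" "h \<le> 1"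
      have "V Fc N0 \<le> X Fc N0 h + h * K1" using K1[OF h] by linarith
      also have "\<dots> \<le> B^2 * X (\<lambda>z. z) N0 h + h * K1" using XX by simp
      also have "B^2 * X (\<lambda>z. z) N0 h \<le> B^2 * (V (\<lambda>z. z) N0 + h * K2)"
        using K2[OF h] by (intro mult_left_mono) auto
      finally show "V Fc N0 \<le> B^2 * V (\<lambda>z. z) N0 + h * (K1 + B^2 * K2)" by (simp add: algebra_simps)
    qed
  qed
  have WW: "W Fc \<le> B^2 * W (\<lambda>z. z)"
  proof (rule eps_N[where K="K3 + B^2 * K4"])
    fix N0 :: nat
    have "W Fc \<le> V Fc N0 + K3 / 2^N0" using K3[of N0] by linarith
    also have "\<dots> \<le> B^2 * V (\<lambda>z. z) N0 + K3 / 2^N0" using VV by simp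
    also have "B^2 * V (\<lambda>z. z) N0 \<le> B^2 * (W (\<lambda>z. z) + K4 / 2^N0)"
      using K4[of N0] by (intro mult_left_mono) auto
    finally show "W Fc \<le> B^2 * W (\<lambda>z. z) + (K3 + B^2 * K4) / 2^N0" by (simp add: algebra_simps add_divide_distrib)
  qed
  have "W \<Phi> = Qc a (\<lambda>k. \<Phi> (z k)) m" for \<Phi>
    unfolding W_def line_i by (rule SS_Qc)
  thus ?thesis using WW by simp
qed

theorem lemma3:
  fixes F :: "real^'n \<Rightarrow> real^'n" and Fc :: "complex^'n \<Rightarrow> complex^'n"
  assumes "real_analytic_vec F"
    and "entire_vec Fc"
    and "\<And>x. Fc (cvec x) = cvec (F x)"
    and "koopman_bounded_real gauss_kernel F"
  shows "koopman_bounded_complex gauss_kernel_C Fc"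
proof -
  obtain B :: real where B0: "B \<ge> 0" and B: "\<And>m b x. Qr b (\<lambda>i. F (x i)) m \<le> B^2 * Qr b x m"
    using real_dom[OF assms(4)] by blast
  have rd: "Qc c (\<lambda>i. cvec (F (pts i))) M \<le> B^2 * Qc c (\<lambda>i. cvec (pts i)) M" for M c pts
    unfolding Qc_cvec using B[of "\<lambda>i. Re (c i)" pts M] B[of "\<lambda>i. Im (c i)" pts M]
    by (simp add: algebra_simps)
  have cd: "Qc c (\<lambda>i. Fc (z i)) m \<le> (B + 1)^2 * Qc c z m" for m c z
  proof -
    have "Qc c (\<lambda>i. Fc (z i)) m \<le> B^2 * Qc c z m" by (rule complex_dom[OF assms(2,3) rd])
    also have "\<dots> \<le> (B + 1)^2 * Qc c z m"
      using B0 Qc_nonneg[of c z m] by (intro mult_right_mono power_mono) auto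
    finally show ?thesis .
  qed
  show ?thesis by (rule complex_conclusion[OF _ cd]) (use B0 in simp)
qed

end
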